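(* Let $\mathcal E$ be a nonlinear order preserving form on $L^2(\mu)$. For measurable $w\colon X\to[0,\infty]$ let $K(w)=\int_X w\,Gw\,d\mu$, $\tilde K(w)=\inf\{C>0: K(w/C)\le1\}$ and $\mu(w)=\sup\{\|fw\|_1/\|f\|_L: f\in M(\mathcal E)\}$ (the optimal constant in the Hardy inequality $\int_X|f|w\,d\mu\le C\|f\|_L$). Then $\tilde K(w)\le\mu(w)\le2\tilde K(w)$.
   Context: $(X,\mathfrak A,\mu)$ is $\sigma$-finite. A nonlinear order preserving form is a lower semicontinuous convex $\mathcal E\colon L^2(\mu)\to[0,\infty]$ with $\mathcal E(-f)=\mathcal E(f)$, $\mathcal E(0)=0$ and $\mathcal E(f+|g|)+\mathcal E(f-|g|)\le\mathcal E(f+g)+\mathcal E(f-g)$ for all $f,g$. $M(\mathcal E)=\{f:\lim_{\lambda\to0+}\mathcal E(\lambda f)=0\}$, $\|f\|_L=\inf\{\lambda>0:\mathcal E(\lambda^{-1}f)\le1\}$. Resolvent: $G_\alpha f$ is the unique minimizer of $g\mapsto\mathcal E(g)+\frac\alpha2\|g-\alpha^{-1}f\|_2^2$; it is extended to nonnegative measurable functions by monotone limits, and the Green operator is $Gf=\lim_{\alpha\to0+}G_\alpha f$. In $K(w)$ the convention $0\cdot\infty=0$ is used. *)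

theory Defs
  imports "HOL-Analysis.Analysis"
begin

text \<open>Square integrable (real valued, measurable) functions; L^2(mu) is represented
  by representatives, and all notions below are invariant under a.e. equality.\<close>
definition L2 :: "'a measure \<Rightarrow> ('a \<Rightarrow> real) set" where
  "L2 M = {f \<in> borel_measurable M. integrable M (\<lambda>x. (f x)^2)}"

definition nonlinear_order_preserving_form ::
  "'a measure \<Rightarrow> (('a \<Rightarrow> real) \<Rightarrow> ennreal) \<Rightarrow> bool" where
  "nonlinear_order_preserving_form M E \<longleftrightarrow>
     (\<forall>f\<in>L2 M. \<forall>g\<in>L2 M. (AE x in M. f x = g x) \<longrightarrow> E f = E g) \<and>
     (\<forall>f\<in>L2 M. \<forall>g\<in>L2 M. \<forall>t::real. 0 \<le> t \<and> t \<le> 1 \<longrightarrow>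
        E (\<lambda>x. t * f x + (1 - t) * g x) \<le> ennreal t * E f + ennreal (1 - t) * E g) \<and>
     (\<forall>F f. (\<forall>n. F n \<in> L2 M) \<and> f \<in> L2 M \<and>
        ((\<lambda>n. \<integral>x. (F n x - f x)^2 \<partial>M) \<longlonglongrightarrow> 0)
        \<longrightarrow> E f \<le> liminf (\<lambda>n. E (F n))) \<and>
     (\<forall>f\<in>L2 M. E (\<lambda>x. - f x) = E f) \<and>
     E (\<lambda>x. 0) = 0 \<and>
     (\<forall>f\<in>L2 M. \<forall>g\<in>L2 M.
        E (\<lambda>x. f x + \<bar>g x\<bar>) + E (\<lambda>x. f x - \<bar>g x\<bar>) \<le> E (\<lambda>x. f x + g x) + E (\<lambda>x. f x - g x))"

definition resolvent_L2 ::
  "'a measure \<Rightarrow> (('a \<Rightarrow> real) \<Rightarrow> ennreal) \<Rightarrow> real \<Rightarrow> ('a \<Rightarrow> real) \<Rightarrow> ('a \<Rightarrow> real)" where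
  "resolvent_L2 M E \<alpha> f = (SOME g. g \<in> L2 M \<and>
     (\<forall>h\<in>L2 M. E g + ennreal (\<alpha> / 2 * (\<integral>x. (g x - f x / \<alpha>)^2 \<partial>M))
               \<le> E h + ennreal (\<alpha> / 2 * (\<integral>x. (h x - f x / \<alpha>)^2 \<partial>M))))"

definition exhaust :: "'a measure \<Rightarrow> nat \<Rightarrow> 'a set" where
  "exhaust M = (SOME A. range A \<subseteq> sets M \<and> \<Union>(range A) = space M \<and>
                   (\<forall>i. emeasure M (A i) \<noteq> \<infinity>) \<and> incseq A)"

text \<open>Extension of the resolvent to nonnegative measurable functions by monotone limits
  along the increasing L^2 approximations min(f,n) * 1_{A_n}.\<close>
definition resolvent :: "'a measure \<Rightarrow> (('a \<Rightarrow> real) \<Rightarrow> ennreal) \<Rightarrow> real \<Rightarrow> ('a \<Rightarrow> ennreal) \<Rightarrow> 'a \<Rightarrow> ennreal" where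
  "resolvent M E \<alpha> f = (\<lambda>x. SUP n. ennreal (resolvent_L2 M E \<alpha>
      (\<lambda>y. enn2real (min (f y) (of_nat n)) * indicator (exhaust M n) y) x))"

text \<open>Green operator: G f = lim_{alpha -> 0+} G_alpha f (monotone in alpha), along alpha = 1/(n+1).\<close>
definition green :: "'a measure \<Rightarrow> (('a \<Rightarrow> real) \<Rightarrow> ennreal) \<Rightarrow> ('a \<Rightarrow> ennreal) \<Rightarrow> 'a \<Rightarrow> ennreal" where
  "green M E f = (\<lambda>x. SUP n. resolvent M E (1 / real (Suc n)) f x)"

definition Kfun :: "'a measure \<Rightarrow> (('a \<Rightarrow> real) \<Rightarrow> ennreal) \<Rightarrow> ('a \<Rightarrow> ennreal) \<Rightarrow> ennreal" where
  "Kfun M E w = (\<integral>\<^sup>+ x. w x * green M E w x \<partial>M)"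

definition Ktilde :: "'a measure \<Rightarrow> (('a \<Rightarrow> real) \<Rightarrow> ennreal) \<Rightarrow> ('a \<Rightarrow> ennreal) \<Rightarrow> ennreal" where
  "Ktilde M E w = (INF C \<in> {C::real. 0 < C \<and> Kfun M E (\<lambda>x. w x / ennreal C) \<le> 1}. ennreal C)"

definition Lnorm :: "'a measure \<Rightarrow> (('a \<Rightarrow> real) \<Rightarrow> ennreal) \<Rightarrow> ('a \<Rightarrow> real) \<Rightarrow> ennreal" where
  "Lnorm M E f = (INF l \<in> {l::real. 0 < l \<and> E (\<lambda>x. f x / l) \<le> 1}. ennreal l)"

definition ME :: "'a measure \<Rightarrow> (('a \<Rightarrow> real) \<Rightarrow> ennreal) \<Rightarrow> ('a \<Rightarrow> real) set" where
  "ME M E = {f \<in> L2 M. ((\<lambda>l::real. E (\<lambda>x. l * f x)) \<longlongrightarrow> 0) (at_right 0)}"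

text \<open>mu(w) = sup of norm(f w)_1 / norm(f)_L over f in M(E) (ennreal division: x/0 = infinity for x > 0).\<close>
definition hardy_const :: "'a measure \<Rightarrow> (('a \<Rightarrow> real) \<Rightarrow> ennreal) \<Rightarrow> ('a \<Rightarrow> ennreal) \<Rightarrow> ennreal" where
  "hardy_const M E w = (SUP f \<in> ME M E. (\<integral>\<^sup>+ x. ennreal \<bar>f x\<bar> * w x \<partial>M) / Lnorm M E f)"

end

theory Submission
  imports Defs
begin

lemma L2_D: assumes "f \<in> L2 M" shows "f \<in> borel_measurable M" "integrable M (\<lambda>x. (f x)\<^sup>2)"
  using assms by (auto simp: L2_def)

lemma L2_I: "f \<in> borel_measurable M \<Longrightarrow> integrable M (\<lambda>x. (f x)\<^sup>2) \<Longrightarrow> f \<in> L2 M"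
  by (auto simp: L2_def)

lemma L2_mult_integrable:
  assumes "f \<in> L2 M" "g \<in> L2 M" shows "integrable M (\<lambda>x. f x * g x)"
proof (rule Bochner_Integration.integrable_bound)
  show "integrable M (\<lambda>x. (f x)\<^sup>2 + (g x)\<^sup>2)" using L2_D[OF assms(1)] L2_D[OF assms(2)] by auto
  show "(\<lambda>x. f x * g x) \<in> borel_measurable M" using L2_D[OF assms(1)] L2_D[OF assms(2)] by auto
  show "AE x in M. norm (f x * g x) \<le> norm ((f x)\<^sup>2 + (g x)\<^sup>2)"
  proof (intro AE_I2)
    fix x
    have "0 \<le> (\<bar>f x\<bar> - \<bar>g x\<bar>)\<^sup>2" by simp
    then have "2 * (\<bar>f x\<bar> * \<bar>g x\<bar>) \<le> (f x)\<^sup>2 + (g x)\<^sup>2"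
      by (simp add: power2_eq_square abs_mult algebra_simps)
    moreover have "0 \<le> \<bar>f x\<bar> * \<bar>g x\<bar>" by simp
    ultimately have "\<bar>f x * g x\<bar> \<le> (f x)\<^sup>2 + (g x)\<^sup>2" unfolding abs_mult by linarith
    then show "norm (f x * g x) \<le> norm ((f x)\<^sup>2 + (g x)\<^sup>2)" by simp
  qed
qed

lemma L2_square_bound:
  assumes "f \<in> borel_measurable M" "integrable M g" "AE x in M. (f x)\<^sup>2 \<le> g x"
  shows "f \<in> L2 M"
proof (rule L2_I[OF assms(1)], rule Bochner_Integration.integrable_bound[OF assms(2)])
  show "(\<lambda>x. (f x)\<^sup>2) \<in> borel_measurable M" using assms(1) by auto
  show "AE x in M. norm ((f x)\<^sup>2) \<le> norm (g x)" using assms(3) by eventually_elim auto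
qed

lemma L2_add: assumes "f \<in> L2 M" "g \<in> L2 M" shows "(\<lambda>x. f x + g x) \<in> L2 M"
proof (rule L2_square_bound)
  show "(\<lambda>x. f x + g x) \<in> borel_measurable M" using L2_D[OF assms(1)] L2_D[OF assms(2)] by auto
  show "integrable M (\<lambda>x. 2 * (f x)\<^sup>2 + 2 * (g x)\<^sup>2)" using L2_D[OF assms(1)] L2_D[OF assms(2)] by auto
  show "AE x in M. (f x + g x)\<^sup>2 \<le> 2 * (f x)\<^sup>2 + 2 * (g x)\<^sup>2"
  proof (intro AE_I2)
    fix x have "0 \<le> (f x - g x)\<^sup>2" by simp
    then show "(f x + g x)\<^sup>2 \<le> 2 * (f x)\<^sup>2 + 2 * (g x)\<^sup>2" by (simp add: power2_eq_square algebra_simps)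
  qed
qed

lemma L2_cmult: assumes "f \<in> L2 M" shows "(\<lambda>x. c * f x) \<in> L2 M"
proof (rule L2_I)
  show "(\<lambda>x. c * f x) \<in> borel_measurable M" using L2_D[OF assms(1)] by auto
  have "integrable M (\<lambda>x. c\<^sup>2 * (f x)\<^sup>2)" using L2_D[OF assms(1)] by auto
  then show "integrable M (\<lambda>x. (c * f x)\<^sup>2)" by (simp add: power_mult_distrib)
qed

lemma L2_zero: "(\<lambda>x. 0) \<in> L2 M"
  by (rule L2_I) auto

lemma L2_uminus: assumes "f \<in> L2 M" shows "(\<lambda>x. - f x) \<in> L2 M"
  using L2_cmult[OF assms, of "-1"] by simp

lemma L2_diff: assumes "f \<in> L2 M" "g \<in> L2 M" shows "(\<lambda>x. f x - g x) \<in> L2 M"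
  using L2_add[OF assms(1) L2_uminus[OF assms(2)]] by simp

lemma L2_divide: assumes "f \<in> L2 M" shows "(\<lambda>x. f x / c) \<in> L2 M"
  using L2_cmult[OF assms, of "1/c"] by simp

lemma L2_abs: assumes "f \<in> L2 M" shows "(\<lambda>x. \<bar>f x\<bar>) \<in> L2 M"
  using L2_D[OF assms] by (intro L2_I) auto

lemma L2_max: assumes "f \<in> L2 M" "g \<in> L2 M" shows "(\<lambda>x. max (f x) (g x)) \<in> L2 M"
proof (rule L2_square_bound)
  show "(\<lambda>x. max (f x) (g x)) \<in> borel_measurable M" using L2_D[OF assms(1)] L2_D[OF assms(2)] by auto
  show "integrable M (\<lambda>x. (f x)\<^sup>2 + (g x)\<^sup>2)" using L2_D[OF assms(1)] L2_D[OF assms(2)] by auto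
  show "AE x in M. (max (f x) (g x))\<^sup>2 \<le> (f x)\<^sup>2 + (g x)\<^sup>2"
    by (intro AE_I2) (simp add: max_def)
qed

lemma L2_min: assumes "f \<in> L2 M" "g \<in> L2 M" shows "(\<lambda>x. min (f x) (g x)) \<in> L2 M"
proof (rule L2_square_bound)
  show "(\<lambda>x. min (f x) (g x)) \<in> borel_measurable M" using L2_D[OF assms(1)] L2_D[OF assms(2)] by auto
  show "integrable M (\<lambda>x. (f x)\<^sup>2 + (g x)\<^sup>2)" using L2_D[OF assms(1)] L2_D[OF assms(2)] by auto
  show "AE x in M. (min (f x) (g x))\<^sup>2 \<le> (f x)\<^sup>2 + (g x)\<^sup>2"
    by (intro AE_I2) (simp add: min_def)
qed

lemma L2_sq_integrable: assumes "f \<in> L2 M" shows "integrable M (\<lambda>x. (f x)\<^sup>2)"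
  using L2_D[OF assms] by simp


lemma L2_complete:
  fixes s :: "nat \<Rightarrow> 'a \<Rightarrow> real"
  assumes s: "\<And>n. s n \<in> L2 M"
    and C: "\<And>e. e > 0 \<Longrightarrow> \<exists>N. \<forall>n\<ge>N. \<forall>m\<ge>N. (\<integral>x. (s n x - s m x)\<^sup>2 \<partial>M) < e"
  shows "\<exists>g\<in>L2 M. (\<lambda>n. \<integral>x. (s n x - g x)\<^sup>2 \<partial>M) \<longlonglongrightarrow> 0"
proof -
  have [measurable]: "\<And>n. s n \<in> borel_measurable M" using s L2_D by blast
  have "\<exists>r. \<forall>k. (\<forall>i\<ge>r k. \<forall>j\<ge>r k. (\<integral>x. (s i x - s j x)\<^sup>2 \<partial>M) < (1/16)^k) \<and> r k < r (Suc k)"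
  proof (intro dependent_nat_choice, goal_cases)
    case 1
    then show ?case using C[of 1] by auto
  next
    case (2 x n)
    obtain N where N: "\<And>i j. i \<ge> N \<Longrightarrow> j \<ge> N \<Longrightarrow> (\<integral>x. (s i x - s j x)\<^sup>2 \<partial>M) < (1/16)^Suc n"
      using C[of "(1/16)^Suc n"] by auto
    show ?case
    proof (intro exI[of _ "max N (Suc x)"] conjI allI impI)
      fix i j assume "max N (Suc x) \<le> i" "max N (Suc x) \<le> j"
      then show "(\<integral>x. (s i x - s j x)\<^sup>2 \<partial>M) < (1/16)^Suc n" by (intro N) auto
    qed auto
  qed
  then obtain r where r_less: "\<And>k. r k < r (Suc k)"
    and hr: "\<And>k i j. i \<ge> r k \<Longrightarrow> j \<ge> r k \<Longrightarrow> (\<integral>x. (s i x - s j x)\<^sup>2 \<partial>M) < (1/16)^k"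
    by blast
  have sm: "strict_mono r" using r_less by (simp add: strict_mono_Suc_iff)
  define d where "d k x = s (r (Suc k)) x - s (r k) x" for k x
  have [measurable]: "\<And>k. d k \<in> borel_measurable M" unfolding d_def by measurable
  have dL2: "\<And>k. d k \<in> L2 M" unfolding d_def using s by (intro L2_diff)
  have dint: "(\<integral>x. (d k x)\<^sup>2 \<partial>M) < (1/16)^k" for k
    unfolding d_def using r_less[of k] by (intro hr) auto
  define G where "G x = (\<Sum>k. ennreal (4^k * (d k x)\<^sup>2))" for x
  have [measurable]: "G \<in> borel_measurable M" unfolding G_def by measurable
  have "(\<integral>\<^sup>+x. G x \<partial>M) = (\<Sum>k. \<integral>\<^sup>+x. ennreal (4^k * (d k x)\<^sup>2) \<partial>M)"
    unfolding G_def by (rule nn_integral_suminf) measurable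
  also have "\<dots> \<le> (\<Sum>k. ennreal ((1/4)^k))"
  proof (rule suminf_le)
    fix k
    have "(\<integral>\<^sup>+x. ennreal (4^k * (d k x)\<^sup>2) \<partial>M) = ennreal (\<integral>x. 4^k * (d k x)\<^sup>2 \<partial>M)"
      using L2_sq_integrable[OF dL2[of k]] by (intro nn_integral_eq_integral) auto
    also have "\<dots> = ennreal (4^k * (\<integral>x. (d k x)\<^sup>2 \<partial>M))" by simp
    also have "\<dots> \<le> ennreal ((1/4)^k)"
    proof (rule ennreal_leI)
      have "4^k * (\<integral>x. (d k x)\<^sup>2 \<partial>M) \<le> (4::real)^k * (1/16)^k"
        using dint[of k] by (intro mult_left_mono) auto
      also have "\<dots> = (1/4)^k" by (simp add: power_mult_distrib[symmetric])
      finally show "4^k * (\<integral>x. (d k x)\<^sup>2 \<partial>M) \<le> (1/4)^k" .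
    qed
    finally show "(\<integral>\<^sup>+x. ennreal (4^k * (d k x)\<^sup>2) \<partial>M) \<le> ennreal ((1/4)^k)" .
  qed auto
  also have "\<dots> = ennreal (\<Sum>k. (1/4::real)^k)"
    by (rule suminf_ennreal2) auto
  finally have Gle: "(\<integral>\<^sup>+x. G x \<partial>M) \<le> ennreal (\<Sum>k. (1/4::real)^k)" .
  have "(\<integral>\<^sup>+x. G x \<partial>M) < \<infinity>" by (rule le_less_trans[OF Gle]) simp
  then have AEG: "AE x in M. G x < \<infinity>" by (intro finite_nn_integral_imp_ae_finite) auto
  have conv: "convergent (\<lambda>n. s (r n) x)" if Gx: "G x < \<infinity>" for x
  proof -
    define S where "S = enn2real (G x)"
    have "ennreal (4^k * (d k x)\<^sup>2) \<le> G x" for k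
    proof -
      have "(\<Sum>i\<in>{k}. ennreal (4^i * (d i x)\<^sup>2)) \<le> G x"
        unfolding G_def by (rule sum_le_suminf) auto
      then show ?thesis by simp
    qed
    then have le4: "4^k * (d k x)\<^sup>2 \<le> S" for k
    proof -
      have "enn2real (ennreal (4^k * (d k x)\<^sup>2)) \<le> enn2real (G x)"
        using Gx \<open>\<And>k. ennreal (4^k * (d k x)\<^sup>2) \<le> G x\<close> by (intro enn2real_mono) auto
      then show ?thesis unfolding S_def by simp
    qed
    have bnd: "\<bar>d k x\<bar> \<le> sqrt S * (1/2)^k" for k
    proof -
      have "(2^k * \<bar>d k x\<bar>)\<^sup>2 = (2^k*2^k) * (d k x)\<^sup>2" by (simp add: power2_eq_square algebra_simps)
      also have "(2::real)^k*2^k = 4^k" by (simp add: power_mult_distrib[symmetric])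
      finally have "(2^k * \<bar>d k x\<bar>)\<^sup>2 \<le> S" using le4[of k] by simp
      then have "2^k * \<bar>d k x\<bar> \<le> sqrt S" using real_le_rsqrt by blast
      then show ?thesis by (simp add: field_simps power_one_over)
    qed
    have "summable (\<lambda>k. d k x)"
      by (rule summable_comparison_test'[where g="\<lambda>k. sqrt S * (1/2)^k" and N=0])
         (auto intro!: summable_mult summable_geometric simp: bnd)
    then have "(\<lambda>n. \<Sum>k<n. d k x) \<longlonglongrightarrow> (\<Sum>k. d k x)" by (rule summable_LIMSEQ)
    moreover have "(\<lambda>n. \<Sum>k<n. d k x) = (\<lambda>n. s (r n) x - s (r 0) x)"
      unfolding d_def using sum_lessThan_telescope[of "\<lambda>k. s (r k) x"] by simp
    ultimately have "(\<lambda>n. s (r n) x - s (r 0) x + s (r 0) x) \<longlonglongrightarrow> (\<Sum>k. d k x) + s (r 0) x"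
      by (intro tendsto_add) auto
    then show ?thesis unfolding convergent_def by auto
  qed
  define g where "g x = lim (\<lambda>n. s (r n) x)" for x
  have [measurable]: "g \<in> borel_measurable M" unfolding g_def by measurable
  have AEconv: "AE x in M. (\<lambda>n. s (r n) x) \<longlonglongrightarrow> g x"
    using AEG by eventually_elim (simp add: g_def conv convergent_LIMSEQ_iff[symmetric])
  have bound: "(\<integral>\<^sup>+x. ennreal ((s n x - g x)\<^sup>2) \<partial>M) \<le> ennreal e"
    if hn: "\<And>i j. i \<ge> n \<Longrightarrow> j \<ge> n \<Longrightarrow> (\<integral>x. (s i x - s j x)\<^sup>2 \<partial>M) < e" for n e
  proof -
    have "(\<integral>\<^sup>+x. ennreal ((s n x - g x)\<^sup>2) \<partial>M) = (\<integral>\<^sup>+x. liminf (\<lambda>k. ennreal ((s n x - s (r k) x)\<^sup>2)) \<partial>M)"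
    proof (rule nn_integral_cong_AE)
      show "AE x in M. ennreal ((s n x - g x)\<^sup>2) = liminf (\<lambda>k. ennreal ((s n x - s (r k) x)\<^sup>2))"
        using AEconv
      proof eventually_elim
        case (elim x)
        have "(\<lambda>k. ennreal ((s n x - s (r k) x)\<^sup>2)) \<longlonglongrightarrow> ennreal ((s n x - g x)\<^sup>2)"
          by (intro tendsto_ennrealI tendsto_power tendsto_diff tendsto_const elim)
        from lim_imp_Liminf[OF sequentially_bot this] show ?case by simp
      qed
    qed
    also have "\<dots> \<le> liminf (\<lambda>k. \<integral>\<^sup>+x. ennreal ((s n x - s (r k) x)\<^sup>2) \<partial>M)"
      by (rule nn_integral_liminf) measurable
    also have "\<dots> \<le> ennreal e"
    proof (rule Liminf_le)
      show "eventually (\<lambda>k. (\<integral>\<^sup>+x. ennreal ((s n x - s (r k) x)\<^sup>2) \<partial>M) \<le> ennreal e) sequentially"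
      proof (rule eventually_sequentiallyI[of n])
        fix k assume "n \<le> k"
        then have "r k \<ge> n" using seq_suble[OF sm, of k] by linarith
        have "(\<integral>\<^sup>+x. ennreal ((s n x - s (r k) x)\<^sup>2) \<partial>M) = ennreal (\<integral>x. (s n x - s (r k) x)\<^sup>2 \<partial>M)"
          using L2_sq_integrable[OF L2_diff[OF s s]] by (intro nn_integral_eq_integral) auto
        also have "\<dots> \<le> ennreal e" using hn[of n "r k"] \<open>r k \<ge> n\<close> by (intro ennreal_leI) auto
        finally show "(\<integral>\<^sup>+x. ennreal ((s n x - s (r k) x)\<^sup>2) \<partial>M) \<le> ennreal e" .
      qed
    qed auto
    finally show ?thesis .
  qed
  obtain N0 where N0: "\<And>i j. i \<ge> N0 \<Longrightarrow> j \<ge> N0 \<Longrightarrow> (\<integral>x. (s i x - s j x)\<^sup>2 \<partial>M) < 1"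
    using C[of 1] by auto
  have "integrable M (\<lambda>x. (s N0 x - g x)\<^sup>2)"
    using bound[of N0 1] N0 by (intro integrableI_nonneg) (auto simp: top.not_eq_extremum intro: le_less_trans)
  then have "(\<lambda>x. s N0 x - g x) \<in> L2 M" by (intro L2_I) auto
  from L2_diff[OF s[of N0] this] have gL2: "g \<in> L2 M" by simp
  have "(\<lambda>n. \<integral>x. (s n x - g x)\<^sup>2 \<partial>M) \<longlonglongrightarrow> 0"
  proof (rule LIMSEQ_I)
    fix e :: real assume "e > 0"
    then obtain N where N: "\<And>i j. i \<ge> N \<Longrightarrow> j \<ge> N \<Longrightarrow> (\<integral>x. (s i x - s j x)\<^sup>2 \<partial>M) < e/2"
      using C[of "e/2"] by auto
    show "\<exists>N. \<forall>n\<ge>N. norm ((\<integral>x. (s n x - g x)\<^sup>2 \<partial>M) - 0) < e"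
    proof (intro exI allI impI)
      fix n assume "N \<le> n"
      have "ennreal (\<integral>x. (s n x - g x)\<^sup>2 \<partial>M) = (\<integral>\<^sup>+x. ennreal ((s n x - g x)\<^sup>2) \<partial>M)"
        using L2_sq_integrable[OF L2_diff[OF s gL2]] by (intro nn_integral_eq_integral[symmetric]) auto
      also have "\<dots> \<le> ennreal (e/2)"
      proof (rule bound)
        fix i j assume "n \<le> i" "n \<le> j"
        then show "(\<integral>x. (s i x - s j x)\<^sup>2 \<partial>M) < e/2" using \<open>N \<le> n\<close> by (intro N) auto
      qed
      finally have "(\<integral>x. (s n x - g x)\<^sup>2 \<partial>M) \<le> e/2" using \<open>e > 0\<close> by (simp add: ennreal_le_iff)
      moreover have "0 \<le> (\<integral>x. (s n x - g x)\<^sup>2 \<partial>M)" by simp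
      ultimately show "norm ((\<integral>x. (s n x - g x)\<^sup>2 \<partial>M) - 0) < e" using \<open>e > 0\<close> by simp
    qed
  qed
  with gL2 show ?thesis by blast
qed


definition Qf :: "'a measure \<Rightarrow> real \<Rightarrow> ('a \<Rightarrow> real) \<Rightarrow> ('a \<Rightarrow> real) \<Rightarrow> real" where
  "Qf M \<alpha> f g = \<alpha> / 2 * (\<integral>x. (g x - f x / \<alpha>)\<^sup>2 \<partial>M)"

definition Phi :: "'a measure \<Rightarrow> (('a \<Rightarrow> real) \<Rightarrow> ennreal) \<Rightarrow> real \<Rightarrow> ('a \<Rightarrow> real) \<Rightarrow> ('a \<Rightarrow> real) \<Rightarrow> ennreal" where
  "Phi M E \<alpha> f g = E g + ennreal (Qf M \<alpha> f g)"

definition ismin :: "'a measure \<Rightarrow> (('a \<Rightarrow> real) \<Rightarrow> ennreal) \<Rightarrow> real \<Rightarrow> ('a \<Rightarrow> real) \<Rightarrow> ('a \<Rightarrow> real) \<Rightarrow> bool" where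
  "ismin M E \<alpha> f g \<longleftrightarrow> g \<in> L2 M \<and> (\<forall>h\<in>L2 M. Phi M E \<alpha> f g \<le> Phi M E \<alpha> f h)"

lemma resolvent_L2_alt: "resolvent_L2 M E \<alpha> f = (SOME g. ismin M E \<alpha> f g)"
  unfolding resolvent_L2_def ismin_def Phi_def Qf_def by simp

lemma Qf_nonneg: "0 \<le> \<alpha> \<Longrightarrow> 0 \<le> Qf M \<alpha> f g"
  unfolding Qf_def by simp

lemma Phi_real: "E g \<noteq> \<infinity> \<Longrightarrow> 0 \<le> \<alpha> \<Longrightarrow> Phi M E \<alpha> f g = ennreal (enn2real (E g) + Qf M \<alpha> f g)"
proof -
  assume "E g \<noteq> \<infinity>" "0 \<le> \<alpha>"
  then obtain r where r: "E g = ennreal r" "0 \<le> r" by (cases "E g") auto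
  show ?thesis unfolding Phi_def using r Qf_nonneg[OF \<open>0 \<le> \<alpha>\<close>, of M f g] by (simp add: ennreal_plus)
qed

lemma Qf_mid:
  assumes f: "f \<in> L2 M" and g: "g \<in> L2 M" and h: "h \<in> L2 M"
  shows "Qf M \<alpha> f (\<lambda>x. 1/2 * g x + (1 - 1/2) * h x) = (Qf M \<alpha> f g + Qf M \<alpha> f h) / 2 - \<alpha>/8 * (\<integral>x. (g x - h x)\<^sup>2 \<partial>M)"
proof -
  have i1: "integrable M (\<lambda>x. (g x - f x / \<alpha>)\<^sup>2)" by (intro L2_sq_integrable L2_diff g L2_divide f)
  have i2: "integrable M (\<lambda>x. (h x - f x / \<alpha>)\<^sup>2)" by (intro L2_sq_integrable L2_diff h L2_divide f)
  have i3: "integrable M (\<lambda>x. (g x - h x)\<^sup>2)" by (intro L2_sq_integrable L2_diff h g)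
  have pw: "(1/2 * g x + (1 - 1/2) * h x - f x / \<alpha>)\<^sup>2 = ((g x - f x / \<alpha>)\<^sup>2 + (h x - f x / \<alpha>)\<^sup>2) / 2 - (g x - h x)\<^sup>2 / 4" for x
  proof -
    have gen: "\<And>a b c::real. (1/2 * b + (1 - 1/2) * c - a)\<^sup>2 = ((b - a)\<^sup>2 + (c - a)\<^sup>2) / 2 - (b - c)\<^sup>2 / 4"
      by (simp add: power2_eq_square field_simps)
    show ?thesis by (rule gen)
  qed
  have "(\<integral>x. (1/2 * g x + (1 - 1/2) * h x - f x / \<alpha>)\<^sup>2 \<partial>M)
      = (\<integral>x. ((g x - f x / \<alpha>)\<^sup>2 + (h x - f x / \<alpha>)\<^sup>2) / 2 - (g x - h x)\<^sup>2 / 4 \<partial>M)"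
    by (simp only: pw)
  also have "\<dots> = ((\<integral>x. (g x - f x / \<alpha>)\<^sup>2 \<partial>M) + (\<integral>x. (h x - f x / \<alpha>)\<^sup>2 \<partial>M)) / 2 - (\<integral>x. (g x - h x)\<^sup>2 \<partial>M) / 4"
    using i1 i2 i3 by simp
  finally have key: "(\<integral>x. (1/2 * g x + (1 - 1/2) * h x - f x / \<alpha>)\<^sup>2 \<partial>M)
      = ((\<integral>x. (g x - f x / \<alpha>)\<^sup>2 \<partial>M) + (\<integral>x. (h x - f x / \<alpha>)\<^sup>2 \<partial>M)) / 2 - (\<integral>x. (g x - h x)\<^sup>2 \<partial>M) / 4" .
  have gen: "\<And>a A B C::real. a/2 * ((A + B)/2 - C/4) = (a/2*A + a/2*B)/2 - a/8*C"
    by (simp add: field_simps)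
  show ?thesis unfolding Qf_def key by (rule gen)
qed

lemma Qf_seg:
  assumes f: "f \<in> L2 M" and g: "g \<in> L2 M" and h: "h \<in> L2 M" and a: "\<alpha> > 0"
  shows "Qf M \<alpha> f (\<lambda>x. t * h x + (1 - t) * g x) = Qf M \<alpha> f g
     + t * (\<integral>x. (\<alpha> * g x - f x) * (h x - g x) \<partial>M) + t\<^sup>2 * (\<alpha>/2 * (\<integral>x. (h x - g x)\<^sup>2 \<partial>M))"
proof -
  have i1: "integrable M (\<lambda>x. (g x - f x / \<alpha>)\<^sup>2)" by (intro L2_sq_integrable L2_diff g L2_divide f)
  have i2: "integrable M (\<lambda>x. (\<alpha> * g x - f x) * (h x - g x))"
    by (intro L2_mult_integrable L2_diff L2_cmult g f h)
  have i3: "integrable M (\<lambda>x. (h x - g x)\<^sup>2)" by (intro L2_sq_integrable L2_diff h g)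
  have pw: "\<alpha> / 2 * (t * h x + (1 - t) * g x - f x / \<alpha>)\<^sup>2 = \<alpha> / 2 * (g x - f x / \<alpha>)\<^sup>2
     + t * ((\<alpha> * g x - f x) * (h x - g x)) + t\<^sup>2 * (\<alpha>/2 * (h x - g x)\<^sup>2)" for x
    using a by (simp add: power2_eq_square field_simps)
  have "Qf M \<alpha> f (\<lambda>x. t * h x + (1 - t) * g x) = (\<integral>x. \<alpha> / 2 * (t * h x + (1 - t) * g x - f x / \<alpha>)\<^sup>2 \<partial>M)"
    unfolding Qf_def by simp
  also have "\<dots> = (\<integral>x. \<alpha> / 2 * (g x - f x / \<alpha>)\<^sup>2
     + t * ((\<alpha> * g x - f x) * (h x - g x)) + t\<^sup>2 * (\<alpha>/2 * (h x - g x)\<^sup>2) \<partial>M)"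
    by (simp only: pw)
  also have "\<dots> = \<alpha> / 2 * (\<integral>x. (g x - f x / \<alpha>)\<^sup>2 \<partial>M)
     + t * (\<integral>x. (\<alpha> * g x - f x) * (h x - g x) \<partial>M) + t\<^sup>2 * (\<alpha>/2 * (\<integral>x. (h x - g x)\<^sup>2 \<partial>M))"
    using i1 i2 i3 by simp
  finally show ?thesis unfolding Qf_def .
qed

lemma Qf_zero_cmp:
  assumes f: "f \<in> L2 M" and g: "g \<in> L2 M" and a: "\<alpha> > 0"
  shows "Qf M \<alpha> f g = Qf M \<alpha> f (\<lambda>x. 0) + \<alpha>/2 * (\<integral>x. (g x)\<^sup>2 \<partial>M) - (\<integral>x. f x * g x \<partial>M)"
proof -
  have i1: "integrable M (\<lambda>x. (f x / \<alpha>)\<^sup>2)" by (intro L2_sq_integrable L2_divide f)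
  have i2: "integrable M (\<lambda>x. f x * g x)" by (intro L2_mult_integrable f g)
  have i3: "integrable M (\<lambda>x. (g x)\<^sup>2)" by (intro L2_sq_integrable g)
  have pw: "\<alpha> / 2 * (g x - f x / \<alpha>)\<^sup>2 = \<alpha> / 2 * (f x / \<alpha>)\<^sup>2 + \<alpha>/2 * (g x)\<^sup>2 - f x * g x" for x
    using a by (simp add: power2_eq_square field_simps)
  have "Qf M \<alpha> f g = (\<integral>x. \<alpha> / 2 * (g x - f x / \<alpha>)\<^sup>2 \<partial>M)"
    unfolding Qf_def by simp
  also have "\<dots> = (\<integral>x. \<alpha> / 2 * (f x / \<alpha>)\<^sup>2 + \<alpha>/2 * (g x)\<^sup>2 - f x * g x \<partial>M)"
    by (simp only: pw)
  also have "\<dots> = \<alpha> / 2 * (\<integral>x. (f x / \<alpha>)\<^sup>2 \<partial>M) + \<alpha>/2 * (\<integral>x. (g x)\<^sup>2 \<partial>M) - (\<integral>x. f x * g x \<partial>M)"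
    using i1 i2 i3 by simp
  finally show ?thesis unfolding Qf_def by simp
qed


lemma ennreal_lincomb: "0 \<le> a \<Longrightarrow> 0 \<le> b \<Longrightarrow> 0 \<le> x \<Longrightarrow> 0 \<le> y \<Longrightarrow>
  ennreal a * ennreal x + ennreal b * ennreal y = ennreal (a*x + b*y)"
  by (simp add: ennreal_mult ennreal_plus)

context
  fixes M :: "'a measure" and E :: "('a \<Rightarrow> real) \<Rightarrow> ennreal"
  assumes opf: "nonlinear_order_preserving_form M E"
begin

lemma E_conv: "f \<in> L2 M \<Longrightarrow> g \<in> L2 M \<Longrightarrow> 0 \<le> t \<Longrightarrow> t \<le> 1 \<Longrightarrow>
   E (\<lambda>x. t * f x + (1 - t) * g x) \<le> ennreal t * E f + ennreal (1 - t) * E g"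
  using opf unfolding nonlinear_order_preserving_form_def by blast

lemma E_lsc: "(\<And>n. F n \<in> L2 M) \<Longrightarrow> f \<in> L2 M \<Longrightarrow> (\<lambda>n. \<integral>x. (F n x - f x)\<^sup>2 \<partial>M) \<longlonglongrightarrow> 0 \<Longrightarrow>
   E f \<le> liminf (\<lambda>n. E (F n))"
  using opf unfolding nonlinear_order_preserving_form_def by blast

lemma E_sym: "f \<in> L2 M \<Longrightarrow> E (\<lambda>x. - f x) = E f"
  using opf unfolding nonlinear_order_preserving_form_def by blast

lemma E_zero: "E (\<lambda>x. 0) = 0"
  using opf unfolding nonlinear_order_preserving_form_def by blast

lemma E_order: "f \<in> L2 M \<Longrightarrow> g \<in> L2 M \<Longrightarrow>
   E (\<lambda>x. f x + \<bar>g x\<bar>) + E (\<lambda>x. f x - \<bar>g x\<bar>) \<le> E (\<lambda>x. f x + g x) + E (\<lambda>x. f x - g x)"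
  using opf unfolding nonlinear_order_preserving_form_def by blast

lemma E_abs: assumes g: "g \<in> L2 M" shows "E (\<lambda>x. \<bar>g x\<bar>) \<le> E g"
proof -
  have "E (\<lambda>x. 0 + \<bar>g x\<bar>) + E (\<lambda>x. 0 - \<bar>g x\<bar>) \<le> E (\<lambda>x. 0 + g x) + E (\<lambda>x. 0 - g x)"
    using E_order[OF L2_zero g] .
  moreover have "E (\<lambda>x. 0 - \<bar>g x\<bar>) = E (\<lambda>x. \<bar>g x\<bar>)" using E_sym[OF L2_abs[OF g]] by simp
  moreover have "E (\<lambda>x. 0 - g x) = E g" using E_sym[OF g] by simp
  ultimately have "E (\<lambda>x. \<bar>g x\<bar>) + E (\<lambda>x. \<bar>g x\<bar>) \<le> E g + E g" by simp
  then show ?thesis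
  proof (cases "E g")
    case (real rb)
    then have "E (\<lambda>x. \<bar>g x\<bar>) \<noteq> \<infinity>" using \<open>E (\<lambda>x. \<bar>g x\<bar>) + E (\<lambda>x. \<bar>g x\<bar>) \<le> E g + E g\<close>
      by (auto simp: top_unique)
    then obtain ra where ra: "E (\<lambda>x. \<bar>g x\<bar>) = ennreal ra" "0 \<le> ra" by (cases "E (\<lambda>x. \<bar>g x\<bar>)") auto
    with real \<open>E (\<lambda>x. \<bar>g x\<bar>) + E (\<lambda>x. \<bar>g x\<bar>) \<le> E g + E g\<close>
    have "ennreal (ra + ra) \<le> ennreal (rb + rb)" by (simp add: ennreal_plus[symmetric] del: ennreal_plus)
    then have "ra \<le> rb" using real by (subst (asm) ennreal_le_iff) auto
    then show ?thesis using ra real by simp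
  qed simp
qed

lemma E_scale: assumes g: "g \<in> L2 M" and t: "0 \<le> t" "t \<le> 1"
  shows "E (\<lambda>x. t * g x) \<le> ennreal t * E g"
proof -
  have "E (\<lambda>x. t * g x + (1 - t) * 0) \<le> ennreal t * E g + ennreal (1 - t) * E (\<lambda>x. 0)"
    using E_conv[OF g L2_zero t] by simp
  then show ?thesis by (simp add: E_zero)
qed

lemma E_mid:
  assumes f: "f \<in> L2 M" and g: "g \<in> L2 M" and h: "h \<in> L2 M"
    and Eg: "E g \<noteq> \<infinity>" and Eh: "E h \<noteq> \<infinity>" and a: "\<alpha> > 0"
  shows "E (\<lambda>x. 1/2 * g x + (1 - 1/2) * h x) \<noteq> \<infinity>"
    "enn2real (E (\<lambda>x. 1/2 * g x + (1 - 1/2) * h x)) + Qf M \<alpha> f (\<lambda>x. 1/2 * g x + (1 - 1/2) * h x)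
     \<le> (enn2real (E g) + Qf M \<alpha> f g + enn2real (E h) + Qf M \<alpha> f h) / 2 - \<alpha>/8 * (\<integral>x. (g x - h x)\<^sup>2 \<partial>M)"
proof -
  obtain rg where rg: "E g = ennreal rg" "0 \<le> rg" using Eg by (cases "E g") auto
  obtain rh where rh: "E h = ennreal rh" "0 \<le> rh" using Eh by (cases "E h") auto
  have "E (\<lambda>x. 1/2 * g x + (1 - 1/2) * h x) \<le> ennreal (1/2) * E g + ennreal (1 - 1/2) * E h"
    by (rule E_conv[OF g h]) auto
  also have "\<dots> = ennreal (1/2 * rg + (1 - 1/2) * rh)"
    unfolding rg(1) rh(1) by (rule ennreal_lincomb) (use rg rh in auto)
  also have "\<dots> = ennreal ((rg + rh)/2)" by (rule arg_cong[where f=ennreal]) simp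
  finally have le: "E (\<lambda>x. 1/2 * g x + (1 - 1/2) * h x) \<le> ennreal ((rg + rh)/2)" .
  then show "E (\<lambda>x. 1/2 * g x + (1 - 1/2) * h x) \<noteq> \<infinity>" by (auto simp: top_unique)
  have "enn2real (E (\<lambda>x. 1/2 * g x + (1 - 1/2) * h x)) \<le> (rg + rh)/2"
    using enn2real_mono[OF le] rg rh by simp
  then show "enn2real (E (\<lambda>x. 1/2 * g x + (1 - 1/2) * h x)) + Qf M \<alpha> f (\<lambda>x. 1/2 * g x + (1 - 1/2) * h x)
     \<le> (enn2real (E g) + Qf M \<alpha> f g + enn2real (E h) + Qf M \<alpha> f h) / 2 - \<alpha>/8 * (\<integral>x. (g x - h x)\<^sup>2 \<partial>M)"
  proof -
    have "enn2real (E g) = rg" "enn2real (E h) = rh" using rg rh by simp_all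
    have gen: "\<And>X Q A B c. X \<le> (rg+rh)/2 \<Longrightarrow> Q = (A+B)/2 - c \<Longrightarrow> X + Q \<le> (rg + A + rh + B)/2 - (c::real)"
      by (simp add: field_simps)
    show ?thesis unfolding \<open>enn2real (E g) = rg\<close> \<open>enn2real (E h) = rh\<close>
      by (rule gen[OF \<open>enn2real (E (\<lambda>x. 1/2 * g x + (1 - 1/2) * h x)) \<le> (rg + rh)/2\<close> Qf_mid[OF f g h, of \<alpha>]])
  qed
qed

lemma ismin_energy:
  assumes m: "ismin M E \<alpha> f g" and f: "f \<in> L2 M" and a: "\<alpha> > 0"
  shows "E g \<noteq> \<infinity>" "enn2real (E g) + \<alpha>/2 * (\<integral>x. (g x)\<^sup>2 \<partial>M) \<le> (\<integral>x. f x * g x \<partial>M)"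
proof -
  have g: "g \<in> L2 M" using m unfolding ismin_def by auto
  have "Phi M E \<alpha> f g \<le> Phi M E \<alpha> f (\<lambda>x. 0)" using m L2_zero unfolding ismin_def by auto
  also have "\<dots> = ennreal (Qf M \<alpha> f (\<lambda>x. 0))" unfolding Phi_def by (simp add: E_zero)
  finally have le: "E g + ennreal (Qf M \<alpha> f g) \<le> ennreal (Qf M \<alpha> f (\<lambda>x. 0))" unfolding Phi_def .
  then show "E g \<noteq> \<infinity>" by (auto simp: top_unique)
  then have "Phi M E \<alpha> f g = ennreal (enn2real (E g) + Qf M \<alpha> f g)" using a by (intro Phi_real) auto
  with le have "ennreal (enn2real (E g) + Qf M \<alpha> f g) \<le> ennreal (Qf M \<alpha> f (\<lambda>x. 0))"
    unfolding Phi_def by simp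
  then have "enn2real (E g) + Qf M \<alpha> f g \<le> Qf M \<alpha> f (\<lambda>x. 0)"
    using Qf_nonneg[of \<alpha> M f "\<lambda>x. 0"] a by (subst (asm) ennreal_le_iff) auto
  then show "enn2real (E g) + \<alpha>/2 * (\<integral>x. (g x)\<^sup>2 \<partial>M) \<le> (\<integral>x. f x * g x \<partial>M)"
    using Qf_zero_cmp[OF f g a] by simp
qed

lemma ismin_L2: "ismin M E \<alpha> f g \<Longrightarrow> g \<in> L2 M"
  unfolding ismin_def by auto

lemma ismin_var:
  assumes m: "ismin M E \<alpha> f g" and f: "f \<in> L2 M" and a: "\<alpha> > 0" and h: "h \<in> L2 M" and Eh: "E h \<noteq> \<infinity>"
  shows "(\<integral>x. f x * h x \<partial>M) \<le> enn2real (E h) + (\<integral>x. f x * g x \<partial>M) + \<alpha>/4 * (\<integral>x. (h x)\<^sup>2 \<partial>M)"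
proof -
  have g: "g \<in> L2 M" using m by (rule ismin_L2)
  have Eg: "E g \<noteq> \<infinity>" using ismin_energy[OF m f a] by simp
  obtain rg where rg: "E g = ennreal rg" "0 \<le> rg" using Eg by (cases "E g") auto
  obtain rh where rh: "E h = ennreal rh" "0 \<le> rh" using Eh by (cases "E h") auto
  define P where "P = (\<integral>x. (\<alpha> * g x - f x) * (h x - g x) \<partial>M)"
  define D where "D = (\<integral>x. (h x - g x)\<^sup>2 \<partial>M)"
  have D0: "0 \<le> D" unfolding D_def by simp
  have step: "rg \<le> rh + P + t * (\<alpha>/2 * D)" if t: "0 < t" "t \<le> 1" for t
  proof -
    define z where "z = (\<lambda>x. t * h x + (1 - t) * g x)"
    have z: "z \<in> L2 M" unfolding z_def by (intro L2_add L2_cmult h g)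
    have "Phi M E \<alpha> f g \<le> Phi M E \<alpha> f z" using m z unfolding ismin_def by auto
    also have "\<dots> = E z + ennreal (Qf M \<alpha> f z)" unfolding Phi_def ..
    also have "\<dots> \<le> ennreal (t * rh + (1 - t) * rg) + ennreal (Qf M \<alpha> f z)"
    proof (rule add_right_mono)
      have "E z \<le> ennreal t * E h + ennreal (1 - t) * E g" unfolding z_def using t by (intro E_conv h g) auto
      also have "\<dots> = ennreal (t * rh + (1 - t) * rg)" unfolding rg(1) rh(1)
        by (rule ennreal_lincomb) (use t rg rh in auto)
      finally show "E z \<le> ennreal (t * rh + (1 - t) * rg)" .
    qed
    also have "\<dots> = ennreal (t * rh + (1 - t) * rg + Qf M \<alpha> f z)"
      using t rg rh Qf_nonneg[of \<alpha> M f z] a by (simp add: ennreal_plus)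
    finally have "ennreal (rg + Qf M \<alpha> f g) \<le> ennreal (t * rh + (1 - t) * rg + Qf M \<alpha> f z)"
      using Phi_real[of E g \<alpha> M f] Eg a rg by simp
    then have "rg + Qf M \<alpha> f g \<le> t * rh + (1 - t) * rg + Qf M \<alpha> f z"
      using t rg rh Qf_nonneg[of \<alpha> M f z] a by (subst (asm) ennreal_le_iff) auto
    also have "Qf M \<alpha> f z = Qf M \<alpha> f g + t * P + t\<^sup>2 * (\<alpha>/2 * D)"
      unfolding z_def P_def D_def by (rule Qf_seg[OF f g h a])
    finally have "t * rg \<le> t * (rh + P + t * (\<alpha>/2 * D))"
      by (simp add: algebra_simps power2_eq_square)
    then show ?thesis using t by simp
  qed
  have "rg \<le> rh + P"
  proof (rule field_le_epsilon)
    fix e :: real assume e: "0 < e"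
    define t where "t = min 1 (e / (\<alpha>/2 * D + 1))"
    have "0 \<le> \<alpha>/2 * D" using a D0 by simp
    then have "0 < \<alpha>/2 * D + 1" by linarith
    then have t0: "0 < t" "t \<le> 1" unfolding t_def using e by auto
    have "t * (\<alpha>/2 * D) \<le> e / (\<alpha>/2 * D + 1) * (\<alpha>/2 * D)"
      unfolding t_def using a D0 by (intro mult_right_mono) auto
    also have "\<dots> \<le> e"
    proof -
      define K where "K = \<alpha>/2 * D"
      have K0: "0 \<le> K" unfolding K_def using a D0 by simp
      have "K / (K + 1) \<le> 1" using K0 by simp
      then have "e * (K / (K + 1)) \<le> e * 1" using e by (intro mult_left_mono) auto
      then show ?thesis unfolding K_def[symmetric] by simp
    qed
    finally show "rg \<le> rh + P + e" using step[OF t0] by linarith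
  qed
  have iP: "integrable M (\<lambda>x. (\<alpha> * g x - f x) * (h x - g x))"
    by (intro L2_mult_integrable L2_diff L2_cmult g f h)
  have i1: "integrable M (\<lambda>x. (h x)\<^sup>2)" by (intro L2_sq_integrable h)
  have i2: "integrable M (\<lambda>x. f x * h x)" by (intro L2_mult_integrable f h)
  have i3: "integrable M (\<lambda>x. f x * g x)" by (intro L2_mult_integrable f g)
  have "P \<le> (\<integral>x. \<alpha>/4 * (h x)\<^sup>2 - f x * h x + f x * g x \<partial>M)"
    unfolding P_def
  proof (rule integral_mono)
    fix x
    have "0 \<le> \<alpha> * (h x / 2 - g x)\<^sup>2" using a by simp
    then show "(\<alpha> * g x - f x) * (h x - g x) \<le> \<alpha>/4 * (h x)\<^sup>2 - f x * h x + f x * g x"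
      by (simp add: power2_eq_square algebra_simps)
  qed (use iP i1 i2 i3 in auto)
  also have "\<dots> = \<alpha>/4 * (\<integral>x. (h x)\<^sup>2 \<partial>M) - (\<integral>x. f x * h x \<partial>M) + (\<integral>x. f x * g x \<partial>M)"
    using i1 i2 i3 by simp
  finally show ?thesis using \<open>rg \<le> rh + P\<close> rg rh by simp
qed

end

lemma g2: "\<And>a I W::real. 0<a \<Longrightarrow> a/8*I \<le> W/2 \<Longrightarrow> I \<le> 4/a * W"
  by (simp add: field_simps)
lemma g3: "\<And>a e S::real. 0<a \<Longrightarrow> 0 < e \<Longrightarrow> 0 < S \<Longrightarrow> 8 < S * (a * e) \<Longrightarrow> 4/a * (2/S) < e"
  by (simp add: field_simps)
lemma g4: "\<And>u v t::real. 0 < t \<Longrightarrow> (u + v)\<^sup>2 \<le> (1 + t) * u\<^sup>2 + (1 + 1/t) * v\<^sup>2"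
proof -
  fix u v t :: real assume t: "0 < t"
  have "(1 + t) * u\<^sup>2 + (1 + 1/t) * v\<^sup>2 - (u + v)\<^sup>2 = (t * u - v)\<^sup>2 / t"
    using t by (simp add: power2_eq_square field_simps)
  moreover have "0 \<le> (t * u - v)\<^sup>2 / t" using t by simp
  ultimately show "(u + v)\<^sup>2 \<le> (1 + t) * u\<^sup>2 + (1 + 1/t) * v\<^sup>2" by linarith
qed
lemma g5: "\<And>a P J c D::real. P \<le> a/2 * ((1 + t) * J + c * D) \<Longrightarrow> P \<le> (1+t) * (a/2*J) + c * (a/2 * D)"
proof -
  fix a P J c D :: real assume h: "P \<le> a/2 * ((1 + t) * J + c * D)"
  have "a/2 * ((1 + t) * J + c * D) = (1+t) * (a/2*J) + c * (a/2 * D)" by (simp add: field_simps)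
  with h show "P \<le> (1+t) * (a/2*J) + c * (a/2 * D)" by simp
qed
lemma g6: "\<And>Q q X t::real. 0 < t \<Longrightarrow> Q \<le> (1 + t) * q + X \<Longrightarrow> (Q - X) / (1 + t) \<le> q"
  by (simp add: field_simps)
lemma g7: "\<And>Q e::real. 0 \<le> Q \<Longrightarrow> 0 < e \<Longrightarrow> Q - Q / (1 + e / (Q + 1)) \<le> e"
proof -
  fix Q e :: real assume Q: "0 \<le> Q" and e: "0 < e"
  define t where "t = e / (Q + 1)"
  have t: "0 < t" unfolding t_def using Q e by simp
  have "Q - Q / (1 + t) = Q * t / (1 + t)" using t by (simp add: field_simps)
  also have "\<dots> \<le> Q * t / 1" using t Q by (intro divide_left_mono) auto
  also have "Q * t / 1 = e * (Q / (Q + 1))" unfolding t_def using Q by (simp add: field_simps)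
  also have "\<dots> \<le> e * 1" using Q e by (intro mult_left_mono) auto
  finally show "Q - Q / (1 + e / (Q + 1)) \<le> e" unfolding t_def by simp
qed

context
  fixes M :: "'a measure" and E :: "('a \<Rightarrow> real) \<Rightarrow> ennreal"
  assumes opf: "nonlinear_order_preserving_form M E"
begin

lemma ismin_exists:
  assumes f: "f \<in> L2 M" and a: "\<alpha> > 0"
  shows "\<exists>g. ismin M E \<alpha> f g"
proof -
  define m where "m = (INF h\<in>L2 M. Phi M E \<alpha> f h)"
  have m_le: "\<And>h. h \<in> L2 M \<Longrightarrow> m \<le> Phi M E \<alpha> f h" unfolding m_def by (rule INF_lower)
  have "m \<le> Phi M E \<alpha> f (\<lambda>x. 0)" using m_le L2_zero by blast
  also have "\<dots> = ennreal (Qf M \<alpha> f (\<lambda>x. 0))" unfolding Phi_def by (simp add: E_zero[OF opf])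
  finally have "m \<noteq> \<infinity>" by (auto simp: top_unique)
  then obtain mr where mr: "m = ennreal mr" "0 \<le> mr" by (cases m) auto
  have "\<exists>g. g \<in> L2 M \<and> Phi M E \<alpha> f g < ennreal (mr + 1 / Suc n)" for n
  proof -
    have "0 < 1 / real (Suc n)" by simp
    then have pos: "0 < mr + 1 / real (Suc n)" "mr < mr + 1 / real (Suc n)" using mr by linarith+
    have "m < ennreal (mr + 1 / Suc n)" unfolding mr by (rule ennreal_lessI[OF pos(1) pos(2)])
    then show ?thesis unfolding m_def INF_less_iff by blast
  qed
  then have "\<forall>n. \<exists>g. g \<in> L2 M \<and> Phi M E \<alpha> f g < ennreal (mr + 1 / Suc n)" by blast
  from choice[OF this] obtain s where "\<forall>n. s n \<in> L2 M \<and> Phi M E \<alpha> f (s n) < ennreal (mr + 1 / Suc n)"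
    by blast
  then have s: "\<And>n. s n \<in> L2 M" and sPhi: "\<And>n. Phi M E \<alpha> f (s n) < ennreal (mr + 1 / Suc n)"
    by auto
  have Es: "E (s n) \<noteq> \<infinity>" for n using sPhi[of n] unfolding Phi_def by (auto simp: top_unique)
  define e where "e n = enn2real (E (s n))" for n
  define q where "q n = Qf M \<alpha> f (s n)" for n
  have e0: "0 \<le> e n" for n unfolding e_def by simp
  have q0: "0 \<le> q n" for n unfolding q_def using a by (intro Qf_nonneg) auto
  have Phis: "Phi M E \<alpha> f (s n) = ennreal (e n + q n)" for n
    unfolding e_def q_def using Es a by (intro Phi_real) auto
  have upper: "e n + q n < mr + 1 / Suc n" for n
    using sPhi[of n] e0 q0 unfolding Phis by (subst (asm) ennreal_less_iff) (auto intro: add_nonneg_nonneg)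
  have lower: "mr \<le> e n + q n" for n
    using m_le[OF s] e0 q0 unfolding Phis mr by (subst (asm) ennreal_le_iff) (auto intro: add_nonneg_nonneg)
  have cauchy_bound: "(\<integral>x. (s n x - s k x)\<^sup>2 \<partial>M) \<le> 4 / \<alpha> * (1 / Suc n + 1 / Suc k)" for n k
  proof -
    define z where "z = (\<lambda>x. 1/2 * s n x + (1 - 1/2) * s k x)"
    have z: "z \<in> L2 M" unfolding z_def by (intro L2_add L2_cmult s)
    note mid = E_mid[where M=M and E=E and f=f and g="s n" and h="s k" and \<alpha>=\<alpha>, OF opf f s s Es Es a]
    have Ez: "E z \<noteq> \<infinity>" unfolding z_def using mid(1) .
    have "ennreal mr \<le> Phi M E \<alpha> f z" using m_le[OF z] mr by simp
    also have "\<dots> = ennreal (enn2real (E z) + Qf M \<alpha> f z)" using Ez a by (intro Phi_real) auto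
    finally have "mr \<le> enn2real (E z) + Qf M \<alpha> f z"
      using Qf_nonneg[of \<alpha> M f z] a by (subst (asm) ennreal_le_iff) (auto intro: add_nonneg_nonneg)
    also have "\<dots> \<le> (e n + q n + e k + q k) / 2 - \<alpha>/8 * (\<integral>x. (s n x - s k x)\<^sup>2 \<partial>M)"
      unfolding z_def e_def q_def by (rule mid(2))
    finally have mrle: "mr \<le> (e n + q n + e k + q k) / 2 - \<alpha>/8 * (\<integral>x. (s n x - s k x)\<^sup>2 \<partial>M)" .
    have gen: "\<And>mr A B C D I u v a::real. mr \<le> (A + B + C + D)/2 - a/8*I \<Longrightarrow> A + B < mr + u \<Longrightarrow> C + D < mr + v \<Longrightarrow> a/8 * I \<le> (u+v)/2"
      by (simp add: field_simps)
    have "\<alpha>/8 * (\<integral>x. (s n x - s k x)\<^sup>2 \<partial>M) \<le> (1 / Suc n + 1 / Suc k) / 2"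
      by (rule gen[OF mrle upper[of n] upper[of k]])
    then show ?thesis by (rule g2[OF a])
  qed
  have "\<exists>g\<in>L2 M. (\<lambda>n. \<integral>x. (s n x - g x)\<^sup>2 \<partial>M) \<longlonglongrightarrow> 0"
  proof (rule L2_complete[OF s])
    fix \<epsilon> :: real assume "\<epsilon> > 0"
    obtain N :: nat where N: "8 / (\<alpha> * \<epsilon>) < real N" using reals_Archimedean2 by blast
    show "\<exists>N. \<forall>n\<ge>N. \<forall>k\<ge>N. (\<integral>x. (s n x - s k x)\<^sup>2 \<partial>M) < \<epsilon>"
    proof (intro exI allI impI)
      fix n k assume nk: "N \<le> n" "N \<le> k"
      have "1 / real (Suc n) \<le> 1 / real (Suc N)" using nk by (intro divide_left_mono) auto
      moreover have "1 / real (Suc k) \<le> 1 / real (Suc N)" using nk by (intro divide_left_mono) auto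
      ultimately have "4 / \<alpha> * (1 / Suc n + 1 / Suc k) \<le> 4 / \<alpha> * (2 / Suc N)"
        using a by (intro mult_left_mono) auto
      also have "\<dots> < \<epsilon>"
      proof -
        have "8 / (\<alpha> * \<epsilon>) < real (Suc N)" using N by simp
        then have h8: "8 < real (Suc N) * (\<alpha> * \<epsilon>)" using a \<open>\<epsilon> > 0\<close> by (simp add: divide_less_eq)
        have "0 < real (Suc N)" by simp
        from g3[OF a \<open>\<epsilon> > 0\<close> this h8] show ?thesis .
      qed
      finally show "(\<integral>x. (s n x - s k x)\<^sup>2 \<partial>M) < \<epsilon>" using cauchy_bound[of n k] by linarith
    qed
  qed
  then obtain g where g: "g \<in> L2 M" and conv: "(\<lambda>n. \<integral>x. (s n x - g x)\<^sup>2 \<partial>M) \<longlonglongrightarrow> 0" by blast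
  define D where "D n = (\<integral>x. (s n x - g x)\<^sup>2 \<partial>M)" for n
  have D0: "0 \<le> D n" for n unfolding D_def by simp
  define Qg where "Qg = Qf M \<alpha> f g"
  have Qg0: "0 \<le> Qg" unfolding Qg_def using a by (intro Qf_nonneg) auto
  have lsc: "E g \<le> liminf (\<lambda>n. E (s n))" by (rule E_lsc[OF opf s g conv])
  have Qbound: "Qg \<le> (1 + t) * q n + (1 + 1/t) * (\<alpha>/2 * D n)" if t: "t > 0" for t n
  proof -
    have i1: "integrable M (\<lambda>x. (g x - f x / \<alpha>)\<^sup>2)" by (intro L2_sq_integrable L2_diff g L2_divide f)
    have i2: "integrable M (\<lambda>x. (s n x - f x / \<alpha>)\<^sup>2)" by (intro L2_sq_integrable L2_diff s L2_divide f)
    have i3: "integrable M (\<lambda>x. (s n x - g x)\<^sup>2)" by (intro L2_sq_integrable L2_diff s g)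
    have "(\<integral>x. (g x - f x / \<alpha>)\<^sup>2 \<partial>M) \<le> (\<integral>x. (1 + t) * (s n x - f x / \<alpha>)\<^sup>2 + (1 + 1/t) * (s n x - g x)\<^sup>2 \<partial>M)"
    proof (rule integral_mono)
      fix x
      have gen: "\<And>u v::real. (u + v)\<^sup>2 \<le> (1 + t) * u\<^sup>2 + (1 + 1/t) * v\<^sup>2"
        using g4[OF t] by blast
      show "(g x - f x / \<alpha>)\<^sup>2 \<le> (1 + t) * (s n x - f x / \<alpha>)\<^sup>2 + (1 + 1/t) * (s n x - g x)\<^sup>2"
        using gen[of "s n x - f x / \<alpha>" "g x - s n x"] by (simp add: power2_commute)
    qed (use i1 i2 i3 in auto)
    also have "\<dots> = (1 + t) * (\<integral>x. (s n x - f x / \<alpha>)\<^sup>2 \<partial>M) + (1 + 1/t) * D n"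
      unfolding D_def using i2 i3 by simp
    finally have "\<alpha>/2 * (\<integral>x. (g x - f x / \<alpha>)\<^sup>2 \<partial>M) \<le> \<alpha>/2 * ((1 + t) * (\<integral>x. (s n x - f x / \<alpha>)\<^sup>2 \<partial>M) + (1 + 1/t) * D n)"
      using a by (intro mult_left_mono) auto
    then show ?thesis unfolding Qg_def q_def Qf_def by (rule g5)
  qed
  have main: "enn2real (E g) + Qg / (1 + t) \<le> mr" "E g \<noteq> \<infinity>" if t: "t > 0" for t
  proof -
    define b where "b n = mr + 1 / Suc n - (Qg - (1 + 1/t) * (\<alpha>/2 * D n)) / (1 + t)" for n
    have eb: "e n \<le> b n" for n
    proof -
      have "(Qg - (1 + 1/t) * (\<alpha>/2 * D n)) / (1 + t) \<le> q n"
        by (rule g6[OF t Qbound[OF t]])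
      then show ?thesis unfolding b_def using upper[of n] by linarith
    qed
    have "(\<lambda>n. 1 / real (Suc n)) \<longlonglongrightarrow> 0" by (rule LIMSEQ_inverse_real_of_nat[simplified inverse_eq_divide])
    moreover have "(\<lambda>n. D n) \<longlonglongrightarrow> 0" using conv unfolding D_def .
    ultimately have "b \<longlonglongrightarrow> mr + 0 - (Qg - (1 + 1/t) * (\<alpha>/2 * 0)) / (1 + t)"
      unfolding b_def by (intro tendsto_intros) (use t in auto)
    then have blim: "b \<longlonglongrightarrow> mr - Qg / (1 + t)" by simp
    have bpos: "\<forall>n. 0 \<le> b n" using eb e0 by (metis order_trans)
    have B0: "0 \<le> mr - Qg / (1 + t)"
      by (rule LIMSEQ_le_const[OF blim]) (use bpos in auto)
    have "E g \<le> liminf (\<lambda>n. E (s n))" by (rule lsc)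
    also have "\<dots> = liminf (\<lambda>n. ennreal (e n))"
      unfolding e_def using Es by (simp add: ennreal_enn2real_if)
    also have "\<dots> \<le> liminf (\<lambda>n. ennreal (b n))"
      by (intro Liminf_mono always_eventually allI ennreal_leI eb)
    also have "\<dots> = ennreal (mr - Qg / (1 + t))"
      by (intro lim_imp_Liminf sequentially_bot tendsto_ennrealI blim)
    finally have le: "E g \<le> ennreal (mr - Qg / (1 + t))" .
    then show "E g \<noteq> \<infinity>" by (auto simp: top_unique)
    show "enn2real (E g) + Qg / (1 + t) \<le> mr"
      using enn2real_mono[OF le] B0 by simp
  qed
  have Eg: "E g \<noteq> \<infinity>" using main(2)[of 1] by simp
  have final: "enn2real (E g) + Qg \<le> mr"
  proof (rule field_le_epsilon)
    fix \<epsilon> :: real assume \<epsilon>: "\<epsilon> > 0"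
    define t where "t = \<epsilon> / (Qg + 1)"
    have t: "t > 0" unfolding t_def using \<epsilon> Qg0 by simp
    have "Qg - Qg / (1 + t) \<le> \<epsilon>" unfolding t_def by (rule g7[OF Qg0 \<epsilon>])
    then show "enn2real (E g) + Qg \<le> mr + \<epsilon>" using main(1)[OF t] by linarith
  qed
  have "Phi M E \<alpha> f g = ennreal (enn2real (E g) + Qg)" unfolding Qg_def using Eg a by (intro Phi_real) auto
  also have "\<dots> \<le> m" unfolding mr using final by (intro ennreal_leI)
  finally have "Phi M E \<alpha> f g \<le> m" .
  then have "ismin M E \<alpha> f g" unfolding ismin_def using g m_le order_trans by blast
  then show ?thesis by blast
qed

end

lemma pw_f:
  fixes a y1 y2 c1 c2 :: real
  assumes a: "a > 0" and c: "c1 \<le> c2"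
  shows "a/2 * (min y1 y2 - c1/a)\<^sup>2 + a/2 * (max y1 y2 - c2/a)\<^sup>2 \<le> a/2 * (y1 - c1/a)\<^sup>2 + a/2 * (y2 - c2/a)\<^sup>2"
proof (cases "y1 \<le> y2")
  case True then show ?thesis by simp
next
  case False
  have eq: "a/2 * (y1 - c1/a)\<^sup>2 + a/2 * (y2 - c2/a)\<^sup>2 - (a/2 * (y2 - c1/a)\<^sup>2 + a/2 * (y1 - c2/a)\<^sup>2) = (y1 - y2) * (c2 - c1)"
    using a by (simp add: power2_eq_square field_simps)
  have "0 \<le> (y1 - y2) * (c2 - c1)" using False c by simp
  then show ?thesis using False eq by simp
qed

lemma pw_alpha:
  fixes a b y1 y2 c :: real
  assumes a: "a > 0" and ab: "a \<le> b" and y2: "0 \<le> y2"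
  shows "b/2 * (min y1 y2 - c/b)\<^sup>2 + a/2 * (max y1 y2 - c/a)\<^sup>2 \<le> b/2 * (y1 - c/b)\<^sup>2 + a/2 * (y2 - c/a)\<^sup>2"
proof (cases "y1 \<le> y2")
  case True then show ?thesis by simp
next
  case False
  have b: "b > 0" using a ab by simp
  have eq: "b/2 * (y1 - c/b)\<^sup>2 + a/2 * (y2 - c/a)\<^sup>2 - (b/2 * (y2 - c/b)\<^sup>2 + a/2 * (y1 - c/a)\<^sup>2) = (b - a)/2 * (y1\<^sup>2 - y2\<^sup>2)"
    using a b by (simp add: power2_eq_square field_simps)
  have "y2\<^sup>2 \<le> y1\<^sup>2" using False y2 by (intro power_mono) auto
  then have "0 \<le> (b - a)/2 * (y1\<^sup>2 - y2\<^sup>2)" using ab by simp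
  then show ?thesis using False eq by simp
qed

context
  fixes M :: "'a measure" and E :: "('a \<Rightarrow> real) \<Rightarrow> ennreal"
  assumes opf: "nonlinear_order_preserving_form M E"
begin

lemma ismin_unique:
  assumes m1: "ismin M E \<alpha> f g" and m2: "ismin M E \<alpha> f g'" and f: "f \<in> L2 M" and a: "\<alpha> > 0"
  shows "AE x in M. g x = g' x"
proof -
  have g: "g \<in> L2 M" and g': "g' \<in> L2 M" using m1 m2 unfolding ismin_def by auto
  have Eg: "E g \<noteq> \<infinity>" and Eg': "E g' \<noteq> \<infinity>" using ismin_energy[OF opf m1 f a] ismin_energy[OF opf m2 f a] by auto
  have P1: "Phi M E \<alpha> f g = ennreal (enn2real (E g) + Qf M \<alpha> f g)" using Eg a by (intro Phi_real) auto
  have P2: "Phi M E \<alpha> f g' = ennreal (enn2real (E g') + Qf M \<alpha> f g')" using Eg' a by (intro Phi_real) auto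
  have n1: "0 \<le> enn2real (E g) + Qf M \<alpha> f g" using Qf_nonneg[of \<alpha> M f g] a by simp
  have n2: "0 \<le> enn2real (E g') + Qf M \<alpha> f g'" using Qf_nonneg[of \<alpha> M f g'] a by simp
  have "Phi M E \<alpha> f g \<le> Phi M E \<alpha> f g'" "Phi M E \<alpha> f g' \<le> Phi M E \<alpha> f g"
    using m1 m2 g g' unfolding ismin_def by auto
  then have eqv: "enn2real (E g) + Qf M \<alpha> f g = enn2real (E g') + Qf M \<alpha> f g'"
    unfolding P1 P2 using n1 n2 by (simp add: ennreal_le_iff)
  define z where "z = (\<lambda>x. 1/2 * g x + (1 - 1/2) * g' x)"
  have z: "z \<in> L2 M" unfolding z_def by (intro L2_add L2_cmult g g')
  note mid = E_mid[where M=M and E=E and f=f and g=g and h=g' and \<alpha>=\<alpha>, OF opf f g g' Eg Eg' a]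
  have Ez: "E z \<noteq> \<infinity>" unfolding z_def by (rule mid(1))
  have "ennreal (enn2real (E g) + Qf M \<alpha> f g) \<le> Phi M E \<alpha> f z" using m1 z unfolding ismin_def P1 by auto
  also have "\<dots> = ennreal (enn2real (E z) + Qf M \<alpha> f z)" using Ez a by (intro Phi_real) auto
  finally have "enn2real (E g) + Qf M \<alpha> f g \<le> enn2real (E z) + Qf M \<alpha> f z"
    using Qf_nonneg[of \<alpha> M f z] a by (subst (asm) ennreal_le_iff) (auto intro: add_nonneg_nonneg)
  also have "\<dots> \<le> (enn2real (E g) + Qf M \<alpha> f g + enn2real (E g') + Qf M \<alpha> f g') / 2 - \<alpha>/8 * (\<integral>x. (g x - g' x)\<^sup>2 \<partial>M)"
    unfolding z_def by (rule mid(2))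
  finally have le: "\<alpha>/8 * (\<integral>x. (g x - g' x)\<^sup>2 \<partial>M) \<le> 0" using eqv by (simp add: field_simps)
  have nn: "0 \<le> (\<integral>x. (g x - g' x)\<^sup>2 \<partial>M)" by simp
  have "(\<integral>x. (g x - g' x)\<^sup>2 \<partial>M) \<le> 0"
  proof (rule ccontr)
    assume "\<not> (\<integral>x. (g x - g' x)\<^sup>2 \<partial>M) \<le> 0"
    then have "0 < \<alpha>/8 * (\<integral>x. (g x - g' x)\<^sup>2 \<partial>M)" using a by (intro mult_pos_pos) auto
    with le show False by simp
  qed
  with nn have "(\<integral>x. (g x - g' x)\<^sup>2 \<partial>M) = 0" by linarith
  then have "AE x in M. (g x - g' x)\<^sup>2 = 0"
    using L2_sq_integrable[OF L2_diff[OF g g']] by (subst (asm) integral_nonneg_eq_0_iff_AE) auto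
  then show ?thesis by eventually_elim simp
qed

lemma ismin_compare:
  assumes m1: "ismin M E \<alpha>1 f1 g1" and m2: "ismin M E \<alpha>2 f2 g2"
    and f1: "f1 \<in> L2 M" and f2: "f2 \<in> L2 M" and a1: "\<alpha>1 > 0" and a2: "\<alpha>2 > 0"
    and pw: "AE x in M. \<alpha>1/2 * (min (g1 x) (g2 x) - f1 x/\<alpha>1)\<^sup>2 + \<alpha>2/2 * (max (g1 x) (g2 x) - f2 x/\<alpha>2)\<^sup>2
               \<le> \<alpha>1/2 * (g1 x - f1 x/\<alpha>1)\<^sup>2 + \<alpha>2/2 * (g2 x - f2 x/\<alpha>2)\<^sup>2"
  shows "AE x in M. g1 x \<le> g2 x"
proof -
  have g1: "g1 \<in> L2 M" and g2: "g2 \<in> L2 M" using m1 m2 unfolding ismin_def by auto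
  define mn where "mn = (\<lambda>x. min (g1 x) (g2 x))"
  define mx where "mx = (\<lambda>x. max (g1 x) (g2 x))"
  have mn: "mn \<in> L2 M" unfolding mn_def by (intro L2_min g1 g2)
  have mx: "mx \<in> L2 M" unfolding mx_def by (intro L2_max g1 g2)
  define u where "u = (\<lambda>x. (g1 x + g2 x) / 2)"
  define v where "v = (\<lambda>x. (g1 x - g2 x) / 2)"
  have u: "u \<in> L2 M" unfolding u_def by (intro L2_divide L2_add g1 g2)
  have v: "v \<in> L2 M" unfolding v_def by (intro L2_divide L2_diff g1 g2)
  have e1: "(\<lambda>x. u x + \<bar>v x\<bar>) = mx" unfolding u_def v_def mx_def by (rule ext) (simp add: max_def abs_if field_simps)
  have e2: "(\<lambda>x. u x - \<bar>v x\<bar>) = mn" unfolding u_def v_def mn_def by (rule ext) (simp add: min_def abs_if field_simps)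
  have e3: "(\<lambda>x. u x + v x) = g1" unfolding u_def v_def by (rule ext) (simp add: field_simps)
  have e4: "(\<lambda>x. u x - v x) = g2" unfolding u_def v_def by (rule ext) (simp add: field_simps)
  have Eord: "E mx + E mn \<le> E g1 + E g2" using E_order[OF opf u v] unfolding e1 e2 e3 e4 .
  have i1: "integrable M (\<lambda>x. \<alpha>1/2 * (mn x - f1 x/\<alpha>1)\<^sup>2)" by (intro integrable_mult_right L2_sq_integrable L2_diff mn L2_divide f1)
  have i2: "integrable M (\<lambda>x. \<alpha>2/2 * (mx x - f2 x/\<alpha>2)\<^sup>2)" by (intro integrable_mult_right L2_sq_integrable L2_diff mx L2_divide f2)
  have i3: "integrable M (\<lambda>x. \<alpha>1/2 * (g1 x - f1 x/\<alpha>1)\<^sup>2)" by (intro integrable_mult_right L2_sq_integrable L2_diff g1 L2_divide f1)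
  have i4: "integrable M (\<lambda>x. \<alpha>2/2 * (g2 x - f2 x/\<alpha>2)\<^sup>2)" by (intro integrable_mult_right L2_sq_integrable L2_diff g2 L2_divide f2)
  have "Qf M \<alpha>1 f1 mn + Qf M \<alpha>2 f2 mx = (\<integral>x. \<alpha>1/2 * (mn x - f1 x/\<alpha>1)\<^sup>2 + \<alpha>2/2 * (mx x - f2 x/\<alpha>2)\<^sup>2 \<partial>M)"
    unfolding Qf_def using i1 i2 by simp
  also have "\<dots> \<le> (\<integral>x. \<alpha>1/2 * (g1 x - f1 x/\<alpha>1)\<^sup>2 + \<alpha>2/2 * (g2 x - f2 x/\<alpha>2)\<^sup>2 \<partial>M)"
    using pw i1 i2 i3 i4 unfolding mn_def mx_def by (intro integral_mono_AE) auto
  also have "\<dots> = Qf M \<alpha>1 f1 g1 + Qf M \<alpha>2 f2 g2"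
    unfolding Qf_def using i3 i4 by simp
  finally have Qle: "Qf M \<alpha>1 f1 mn + Qf M \<alpha>2 f2 mx \<le> Qf M \<alpha>1 f1 g1 + Qf M \<alpha>2 f2 g2" .
  have q0: "0 \<le> Qf M \<alpha>1 f1 mn" "0 \<le> Qf M \<alpha>2 f2 mx" "0 \<le> Qf M \<alpha>1 f1 g1" "0 \<le> Qf M \<alpha>2 f2 g2"
    using a1 a2 by (auto intro: Qf_nonneg)
  have "ennreal (Qf M \<alpha>1 f1 mn) + ennreal (Qf M \<alpha>2 f2 mx) \<le> ennreal (Qf M \<alpha>1 f1 g1) + ennreal (Qf M \<alpha>2 f2 g2)"
    using Qle q0 by (simp add: ennreal_plus[symmetric] ennreal_leI del: ennreal_plus)
  with Eord have sum0: "(E mx + E mn) + (ennreal (Qf M \<alpha>1 f1 mn) + ennreal (Qf M \<alpha>2 f2 mx))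
      \<le> (E g1 + E g2) + (ennreal (Qf M \<alpha>1 f1 g1) + ennreal (Qf M \<alpha>2 f2 g2))"
    by (rule add_mono)
  have r1: "Phi M E \<alpha>1 f1 mn + Phi M E \<alpha>2 f2 mx = (E mx + E mn) + (ennreal (Qf M \<alpha>1 f1 mn) + ennreal (Qf M \<alpha>2 f2 mx))"
    unfolding Phi_def by (simp add: ac_simps)
  have r2: "Phi M E \<alpha>1 f1 g1 + Phi M E \<alpha>2 f2 g2 = (E g1 + E g2) + (ennreal (Qf M \<alpha>1 f1 g1) + ennreal (Qf M \<alpha>2 f2 g2))"
    unfolding Phi_def by (simp add: ac_simps)
  have sum: "Phi M E \<alpha>1 f1 mn + Phi M E \<alpha>2 f2 mx \<le> Phi M E \<alpha>1 f1 g1 + Phi M E \<alpha>2 f2 g2"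
    unfolding r1 r2 by (rule sum0)
  have Eg2: "E g2 \<noteq> \<infinity>" using ismin_energy[OF opf m2 f2 a2] by simp
  have fin: "Phi M E \<alpha>2 f2 g2 \<noteq> \<infinity>" unfolding Phi_def using Eg2 by simp
  have "Phi M E \<alpha>2 f2 g2 \<le> Phi M E \<alpha>2 f2 mx" using m2 mx unfolding ismin_def by auto
  then have "Phi M E \<alpha>1 f1 mn + Phi M E \<alpha>2 f2 g2 \<le> Phi M E \<alpha>1 f1 mn + Phi M E \<alpha>2 f2 mx"
    by (rule add_left_mono)
  also note sum
  finally have "Phi M E \<alpha>2 f2 g2 + Phi M E \<alpha>1 f1 mn \<le> Phi M E \<alpha>2 f2 g2 + Phi M E \<alpha>1 f1 g1"
    by (simp add: ac_simps)
  then have "Phi M E \<alpha>1 f1 mn \<le> Phi M E \<alpha>1 f1 g1" using fin by (simp add: ennreal_add_left_cancel_le)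
  then have "ismin M E \<alpha>1 f1 mn" using m1 mn unfolding ismin_def by (meson order_trans)
  from ismin_unique[OF this m1 f1 a1] show ?thesis unfolding mn_def
    by eventually_elim (auto simp: min_def split: if_splits)
qed

lemma ismin_zero: "0 < \<alpha> \<Longrightarrow> ismin M E \<alpha> (\<lambda>x. 0) (\<lambda>x. 0)"
  unfolding ismin_def Phi_def Qf_def by (auto simp: E_zero[OF opf] L2_zero)

end

lemma exhaust_props:
  assumes "sigma_finite_measure M"
  shows "range (exhaust M) \<subseteq> sets M" "\<Union>(range (exhaust M)) = space M"
    "\<And>i. emeasure M (exhaust M i) \<noteq> \<infinity>" "incseq (exhaust M)"
proof -
  obtain A where "range A \<subseteq> sets M" "\<Union>(range A) = space M" "\<And>i. emeasure M (A i) \<noteq> \<infinity>" "incseq A"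
    using sigma_finite_measure.sigma_finite_incseq[OF assms] by metis
  then have ex: "\<exists>A. range A \<subseteq> sets M \<and> \<Union>(range A) = space M \<and> (\<forall>i. emeasure M (A i) \<noteq> \<infinity>) \<and> incseq A"
    by blast
  have "range (exhaust M) \<subseteq> sets M \<and> \<Union>(range (exhaust M)) = space M \<and> (\<forall>i. emeasure M (exhaust M i) \<noteq> \<infinity>) \<and> incseq (exhaust M)"
    unfolding exhaust_def by (rule someI_ex[OF ex])
  then show "range (exhaust M) \<subseteq> sets M" "\<Union>(range (exhaust M)) = space M"
    "\<And>i. emeasure M (exhaust M i) \<noteq> \<infinity>" "incseq (exhaust M)" by auto
qed

definition trunc :: "'a measure \<Rightarrow> ('a \<Rightarrow> ennreal) \<Rightarrow> nat \<Rightarrow> 'a \<Rightarrow> real" where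
  "trunc M v n = (\<lambda>y. enn2real (min (v y) (of_nat n)) * indicator (exhaust M n) y)"

lemma resolvent_trunc: "resolvent M E \<alpha> v x = (SUP n. ennreal (resolvent_L2 M E \<alpha> (trunc M v n) x))"
  unfolding resolvent_def trunc_def ..

lemma min_nat_fin: "min x (of_nat n :: ennreal) \<noteq> \<infinity>"
proof
  assume "min x (of_nat n) = \<infinity>"
  then have "(of_nat n :: ennreal) = \<infinity>" using min.cobounded2[of x "of_nat n"] by (simp add: top_unique)
  then show False by simp
qed

lemma trunc_nonneg: "0 \<le> trunc M v n y"
  unfolding trunc_def by simp

lemma trunc_le_n: "trunc M v n y \<le> real n"
proof -
  have "enn2real (min (v y) (of_nat n)) \<le> enn2real (of_nat n :: ennreal)"
    by (intro enn2real_mono) (auto simp: of_nat_less_top)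
  then have "enn2real (min (v y) (of_nat n)) \<le> real n" by simp
  then show ?thesis unfolding trunc_def by (auto simp: indicator_def)
qed

context
  fixes M :: "'a measure"
  assumes sf: "sigma_finite_measure M"
begin

lemma exhaust_sets[measurable]: "exhaust M n \<in> sets M"
  using exhaust_props(1)[OF sf] by auto

lemma trunc_measurable[measurable]: "v \<in> borel_measurable M \<Longrightarrow> trunc M v n \<in> borel_measurable M"
proof -
  assume v: "v \<in> borel_measurable M"
  have "(\<lambda>y. enn2real (min (v y) (of_nat n))) \<in> borel_measurable M" using v by measurable
  moreover have "(indicator (exhaust M n) :: 'a \<Rightarrow> real) \<in> borel_measurable M"
    using exhaust_sets[of n] by (rule borel_measurable_indicator)
  ultimately show ?thesis unfolding trunc_def by (rule borel_measurable_times)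
qed

lemma trunc_L2: assumes v: "v \<in> borel_measurable M" shows "trunc M v n \<in> L2 M"
proof (rule L2_square_bound)
  show "trunc M v n \<in> borel_measurable M" using v by measurable
  show "integrable M (\<lambda>y. (real n)\<^sup>2 * indicator (exhaust M n) y)"
    using exhaust_props(3)[OF sf, of n] by (intro integrable_mult_right integrable_real_indicator) (auto simp: less_top)
  show "AE y in M. (trunc M v n y)\<^sup>2 \<le> (real n)\<^sup>2 * indicator (exhaust M n) y"
  proof (intro AE_I2)
    fix y
    show "(trunc M v n y)\<^sup>2 \<le> (real n)\<^sup>2 * indicator (exhaust M n) y"
    proof (cases "y \<in> exhaust M n")
      case True
      have "(trunc M v n y)\<^sup>2 \<le> (real n)\<^sup>2"
        using trunc_le_n[of M v n y] trunc_nonneg[of M v n y] by (intro power_mono) auto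
      then show ?thesis using True by simp
    next
      case False then show ?thesis unfolding trunc_def by simp
    qed
  qed
qed

lemma trunc_le: "ennreal (trunc M v n y) \<le> v y"
proof (cases "y \<in> exhaust M n")
  case True
  have "min (v y) (of_nat n) \<noteq> \<infinity>" by (rule min_nat_fin)
  then have "ennreal (enn2real (min (v y) (of_nat n))) = min (v y) (of_nat n)"
    by (simp add: ennreal_enn2real_if)
  then show ?thesis using True unfolding trunc_def by simp
next
  case False then show ?thesis unfolding trunc_def by simp
qed

lemma trunc_mono: "trunc M v n y \<le> trunc M v (Suc n) y"
proof -
  have mm: "min (v y) (of_nat n) \<le> min (v y) (of_nat (Suc n))" by (intro min.mono) auto
  have "enn2real (min (v y) (of_nat n)) \<le> enn2real (min (v y) (of_nat (Suc n)))"
    using min_nat_fin[of "v y" "Suc n"] by (intro enn2real_mono[OF mm]) (simp add: less_top)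
  moreover have "indicator (exhaust M n) y \<le> (indicator (exhaust M (Suc n)) y :: real)"
    using exhaust_props(4)[OF sf] by (auto simp: indicator_def incseq_Suc_iff)
  ultimately show ?thesis unfolding trunc_def
    by (intro mult_mono) auto
qed

lemma trunc_incseq: "incseq (\<lambda>n. trunc M v n y)"
  by (intro incseq_SucI trunc_mono)

lemma trunc_SUP: assumes y: "y \<in> space M" shows "(SUP n. ennreal (trunc M v n y)) = v y"
proof (rule antisym)
  show "(SUP n. ennreal (trunc M v n y)) \<le> v y" by (intro SUP_least trunc_le)
  obtain N where N: "y \<in> exhaust M N" using exhaust_props(2)[OF sf] y by auto
  have key: "min (v y) (of_nat n) \<le> (SUP n. ennreal (trunc M v n y))" for n
  proof -
    define k where "k = max n N"
    have yk: "y \<in> exhaust M k" using N exhaust_props(4)[OF sf] unfolding k_def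
      by (meson incseqD max.cobounded2 subsetD)
    have "min (v y) (of_nat k) \<noteq> \<infinity>" by (rule min_nat_fin)
    then have "ennreal (trunc M v k y) = min (v y) (of_nat k)"
      using yk unfolding trunc_def by (simp add: ennreal_enn2real_if)
    moreover have "min (v y) (of_nat n) \<le> min (v y) (of_nat k)" unfolding k_def by (intro min.mono) auto
    ultimately show ?thesis by (metis SUP_upper UNIV_I order_trans)
  qed
  show "v y \<le> (SUP n. ennreal (trunc M v n y))"
  proof (cases "v y = \<infinity>")
    case True
    then have "of_nat n \<le> (SUP n. ennreal (trunc M v n y))" for n using key[of n] by simp
    then have "(SUP n. of_nat n :: ennreal) \<le> (SUP n. ennreal (trunc M v n y))" by (intro SUP_least)
    then show ?thesis using True ennreal_SUP_of_nat_eq_top by (simp add: top_unique)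
  next
    case False
    then obtain n where "v y < of_nat n" using ennreal_Ex_less_of_nat by (auto simp: less_top)
    then show ?thesis using key[of n] by (simp add: min_def split: if_splits)
  qed
qed

end

lemma div_INF_le:
  fixes X :: ennreal and c :: real
  assumes S: "\<And>l. l \<in> S \<Longrightarrow> 0 < l" and X: "\<And>l. l \<in> S \<Longrightarrow> X \<le> ennreal (c * l)" and c: "c > 0"
  shows "X / (INF l\<in>S. ennreal l) \<le> ennreal c"
proof (cases "S = {}")
  case True then show ?thesis by (simp add: ennreal_divide_top)
next
  case False
  then obtain l0 where l0: "l0 \<in> S" by auto
  have Lfin: "(INF l\<in>S. ennreal l) \<le> ennreal l0" using l0 by (rule INF_lower)
  then have "(INF l\<in>S. ennreal l) \<noteq> \<infinity>" by (auto simp: top_unique)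
  then obtain Lr where Lr: "(INF l\<in>S. ennreal l) = ennreal Lr" "0 \<le> Lr"
    by (cases "(INF l\<in>S. ennreal l)") auto
  have XL: "X \<le> ennreal (c * Lr)"
  proof (rule ennreal_le_epsilon)
    fix e :: real assume e: "0 < e"
    have "ennreal Lr < ennreal (Lr + e / c)" using e c Lr by (intro ennreal_lessI) (auto intro: add_nonneg_pos)
    then obtain l where l: "l \<in> S" "ennreal l < ennreal (Lr + e / c)" unfolding Lr(1)[symmetric] INF_less_iff by blast
    have "l < Lr + e / c" using l S[OF l(1)] by (simp add: ennreal_less_iff)
    then have "c * l \<le> c * Lr + e" using c by (simp add: field_simps)
    then have "X \<le> ennreal (c * Lr + e)" using X[OF l(1)] order_trans ennreal_leI by blast
    then show "X \<le> ennreal (c * Lr) + ennreal e" using c Lr e by (simp add: ennreal_plus)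
  qed
  show ?thesis
  proof (cases "Lr = 0")
    case True
    then have "X = 0" using XL by simp
    then show ?thesis by simp
  next
    case False
    then have "0 < Lr" using Lr by simp
    then show ?thesis unfolding Lr(1)
      by (intro divide_le_posI_ennreal) (use XL c in \<open>auto simp: ennreal_mult[symmetric] mult.commute\<close>)
  qed
qed

lemma le_of_div_le:
  fixes X L :: ennreal and mr B :: real
  assumes XL: "X / L \<le> ennreal mr" and LB: "L \<le> ennreal B" and mr: "0 \<le> mr" and B: "0 \<le> B"
  shows "X \<le> ennreal (mr * B)"
proof (cases "L = 0")
  case True
  then have "X = 0" using XL by (auto simp: ennreal_divide_zero top_unique split: if_splits)
  then show ?thesis by simp
next
  case False
  have "L \<noteq> \<infinity>" using LB by (auto simp: top_unique)
  then have "X = X / L * L" using False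
    by (simp add: ennreal_divide_times ennreal_divide_self less_top)
  also have "\<dots> \<le> ennreal mr * ennreal B" by (intro mult_mono XL LB) auto
  also have "\<dots> = ennreal (mr * B)" using mr by (rule ennreal_mult'[symmetric])
  finally show ?thesis .
qed


context
  fixes M :: "'a measure" and E :: "('a \<Rightarrow> real) \<Rightarrow> ennreal"
  assumes sf: "sigma_finite_measure M" and opf: "nonlinear_order_preserving_form M E"
begin

lemma res_ismin: "v \<in> L2 M \<Longrightarrow> 0 < \<alpha> \<Longrightarrow> ismin M E \<alpha> v (resolvent_L2 M E \<alpha> v)"
proof -
  assume "v \<in> L2 M" "0 < \<alpha>"
  from ismin_exists[OF opf this] show ?thesis unfolding resolvent_L2_alt by (rule someI_ex)
qed

lemma green_ge: "ennreal (resolvent_L2 M E (1 / real (Suc k)) (trunc M v n) y) \<le> green M E v y"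
proof -
  have "ennreal (resolvent_L2 M E (1 / real (Suc k)) (trunc M v n) y) \<le> resolvent M E (1 / real (Suc k)) v y"
    unfolding resolvent_trunc by (rule SUP_upper) simp
  also have "\<dots> \<le> green M E v y" unfolding green_def by (rule SUP_upper) simp
  finally show ?thesis .
qed

lemma ennreal_max0: "ennreal (max x 0) = ennreal x"
  by (cases "0 \<le> x") (auto simp: max_def ennreal_neg)

lemma dir1:
  assumes w[measurable]: "w \<in> borel_measurable M" and f: "f \<in> L2 M" and l: "0 < l" and El: "E (\<lambda>x. f x / l) \<le> 1"
    and C: "0 < C" and K: "Kfun M E (\<lambda>x. w x / ennreal C) \<le> 1"
  shows "(\<integral>\<^sup>+ x. ennreal \<bar>f x\<bar> * w x \<partial>M) \<le> ennreal (2 * C * l)"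
proof -
  define w' where "w' = (\<lambda>x. w x / ennreal C)"
  have w'm[measurable]: "w' \<in> borel_measurable M" unfolding w'_def by measurable
  define h where "h = (\<lambda>x. \<bar>f x / l\<bar>)"
  have hL2: "h \<in> L2 M" unfolding h_def by (intro L2_abs L2_divide f)
  have "E h \<le> E (\<lambda>x. f x / l)" unfolding h_def by (rule E_abs[OF opf L2_divide[OF f]])
  then have Eh: "E h \<le> 1" using El by simp
  then have Ehfin: "E h \<noteq> \<infinity>" by (auto simp: top_unique)
  obtain rh where rh: "E h = ennreal rh" "0 \<le> rh" using Ehfin by (cases "E h") auto
  have Eh1: "enn2real (E h) \<le> 1" using Eh rh by (simp add: ennreal_le_1)
  define H where "H = (\<integral>x. (h x)\<^sup>2 \<partial>M)"
  have H0: "0 \<le> H" unfolding H_def by simp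
  have bound_n: "(\<integral>x. trunc M w' n x * h x \<partial>M) \<le> 2" for n
  proof (rule field_le_epsilon)
    fix \<epsilon> :: real assume \<epsilon>: "0 < \<epsilon>"
    obtain k :: nat where k: "H / (4 * \<epsilon>) < real k" using reals_Archimedean2 by blast
    define \<alpha> where "\<alpha> = 1 / real (Suc k)"
    have a: "0 < \<alpha>" unfolding \<alpha>_def by simp
    define v where "v = trunc M w' n"
    have vL2: "v \<in> L2 M" unfolding v_def by (rule trunc_L2[OF sf w'm])
    have v0: "\<And>x. 0 \<le> v x" unfolding v_def by (rule trunc_nonneg)
    define g where "g = resolvent_L2 M E \<alpha> v"
    have m: "ismin M E \<alpha> v g" unfolding g_def by (rule res_ismin[OF vL2 a])
    have gL2: "g \<in> L2 M" using m unfolding ismin_def by auto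
    have var: "(\<integral>x. v x * h x \<partial>M) \<le> enn2real (E h) + (\<integral>x. v x * g x \<partial>M) + \<alpha>/4 * H"
      unfolding H_def by (rule ismin_var[OF opf m vL2 a hL2 Ehfin])
    define gp where "gp = (\<lambda>x. max (g x) 0)"
    have gpL2: "gp \<in> L2 M" unfolding gp_def by (intro L2_max gL2 L2_zero)
    have "(\<integral>x. v x * g x \<partial>M) \<le> (\<integral>x. v x * gp x \<partial>M)"
    proof (rule integral_mono)
      show "integrable M (\<lambda>x. v x * g x)" by (intro L2_mult_integrable vL2 gL2)
      show "integrable M (\<lambda>x. v x * gp x)" by (intro L2_mult_integrable vL2 gpL2)
      fix x show "v x * g x \<le> v x * gp x" unfolding gp_def using v0[of x] by (intro mult_left_mono) auto
    qed
    also have "\<dots> \<le> 1"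
    proof -
      have "ennreal (\<integral>x. v x * gp x \<partial>M) = (\<integral>\<^sup>+x. ennreal (v x * gp x) \<partial>M)"
        using v0 by (intro nn_integral_eq_integral[symmetric] L2_mult_integrable vL2 gpL2) (auto simp: gp_def)
      also have "\<dots> \<le> (\<integral>\<^sup>+x. w' x * green M E w' x \<partial>M)"
      proof (rule nn_integral_mono)
        fix x
        have "ennreal (v x * gp x) = ennreal (v x) * ennreal (g x)"
          unfolding gp_def using v0[of x] by (simp add: ennreal_mult ennreal_max0)
        also have "\<dots> \<le> w' x * green M E w' x"
        proof (rule mult_mono)
          show "ennreal (v x) \<le> w' x" unfolding v_def by (rule trunc_le[OF sf])
          show "ennreal (g x) \<le> green M E w' x" unfolding g_def v_def \<alpha>_def by (rule green_ge)
        qed auto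
        finally show "ennreal (v x * gp x) \<le> w' x * green M E w' x" .
      qed
      also have "\<dots> \<le> 1" using K unfolding Kfun_def w'_def .
      finally show ?thesis by (simp add: ennreal_le_1)
    qed
    finally have vg: "(\<integral>x. v x * g x \<partial>M) \<le> 1" .
    have "\<alpha>/4 * H \<le> \<epsilon>"
    proof -
      have "H < 4 * \<epsilon> * real k" using k \<epsilon> by (simp add: divide_less_eq mult.commute)
      also have "\<dots> \<le> 4 * \<epsilon> * real (Suc k)" using \<epsilon> by simp
      finally have "H \<le> 4 * \<epsilon> * real (Suc k)" by simp
      then show ?thesis unfolding \<alpha>_def by (simp add: field_simps)
    qed
    then show "(\<integral>x. trunc M w' n x * h x \<partial>M) \<le> 2 + \<epsilon>"
      using var vg Eh1 unfolding v_def by linarith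
  qed
  have h0: "\<And>x. 0 \<le> h x" unfolding h_def by simp
  have hm[measurable]: "h \<in> borel_measurable M" using hL2 by (rule L2_D)
  have "(\<integral>\<^sup>+x. ennreal (h x) * w' x \<partial>M) = (\<integral>\<^sup>+x. (SUP n. ennreal (h x) * ennreal (trunc M w' n x)) \<partial>M)"
  proof (rule nn_integral_cong)
    fix x assume "x \<in> space M"
    then have e: "w' x = (SUP n. ennreal (trunc M w' n x))" using trunc_SUP[OF sf, of x w'] by simp
    show "ennreal (h x) * w' x = (SUP n. ennreal (h x) * ennreal (trunc M w' n x))"
      unfolding e by (rule SUP_mult_left_ennreal)
  qed
  also have "\<dots> = (SUP n. \<integral>\<^sup>+x. ennreal (h x) * ennreal (trunc M w' n x) \<partial>M)"
  proof (rule nn_integral_monotone_convergence_SUP_AE)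
    fix n show "AE x in M. ennreal (h x) * ennreal (trunc M w' n x) \<le> ennreal (h x) * ennreal (trunc M w' (Suc n) x)"
      by (intro AE_I2 mult_left_mono ennreal_leI trunc_mono[OF sf]) auto
    show "(\<lambda>x. ennreal (h x) * ennreal (trunc M w' n x)) \<in> borel_measurable M"
      using trunc_measurable[OF sf w'm] by measurable
  qed
  also have "\<dots> \<le> 2"
  proof (rule SUP_least)
    fix n
    have "(\<integral>\<^sup>+x. ennreal (h x) * ennreal (trunc M w' n x) \<partial>M) = (\<integral>\<^sup>+x. ennreal (trunc M w' n x * h x) \<partial>M)"
      by (intro nn_integral_cong) (metis ennreal_mult' h0 mult.commute)
    also have "\<dots> = ennreal (\<integral>x. trunc M w' n x * h x \<partial>M)"
      using h0 trunc_nonneg by (intro nn_integral_eq_integral L2_mult_integrable trunc_L2[OF sf w'm] hL2 AE_I2 mult_nonneg_nonneg) auto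
    also have "\<dots> \<le> 2" using ennreal_leI[OF bound_n[of n]] by simp
    finally show "(\<integral>\<^sup>+x. ennreal (h x) * ennreal (trunc M w' n x) \<partial>M) \<le> 2" .
  qed
  finally have hw: "(\<integral>\<^sup>+x. ennreal (h x) * w' x \<partial>M) \<le> 2" .
  have pw: "ennreal \<bar>f x\<bar> * w x = ennreal (C * l) * (ennreal (h x) * w' x)" for x
  proof -
    have "\<bar>f x\<bar> = l * h x" unfolding h_def using l by (simp add: abs_divide)
    then have e1: "ennreal \<bar>f x\<bar> = ennreal l * ennreal (h x)" using l h0[of x] by (simp add: ennreal_mult)
    have "ennreal C * w' x = w x / ennreal C * ennreal C" unfolding w'_def by (simp add: mult.commute)
    also have "\<dots> = w x" using C by (simp add: ennreal_divide_times ennreal_divide_self)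
    finally have e2: "w x = ennreal C * w' x" by simp
    show ?thesis unfolding e1 e2 using C l by (simp add: ennreal_mult ac_simps)
  qed
  have "(\<integral>\<^sup>+ x. ennreal \<bar>f x\<bar> * w x \<partial>M) = ennreal (C * l) * (\<integral>\<^sup>+x. ennreal (h x) * w' x \<partial>M)"
    unfolding pw by (rule nn_integral_cmult) measurable
  also have "\<dots> \<le> ennreal (C * l) * 2" by (intro mult_left_mono hw) auto
  also have "\<dots> = ennreal (2 * C * l)" using C l by (simp add: ennreal_mult ac_simps)
  finally show ?thesis .
qed

end

context
  fixes M :: "'a measure" and E :: "('a \<Rightarrow> real) \<Rightarrow> ennreal"
  assumes sf: "sigma_finite_measure M" and opf: "nonlinear_order_preserving_form M E"
begin

lemma G_nonneg:
  assumes v: "v \<in> L2 M" and v0: "\<And>x. 0 \<le> v x" and a: "0 < \<alpha>"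
  shows "AE x in M. 0 \<le> resolvent_L2 M E \<alpha> v x"
proof -
  have m: "ismin M E \<alpha> v (resolvent_L2 M E \<alpha> v)" by (rule res_ismin[OF sf opf v a])
  have pw: "AE x in M. \<alpha>/2 * (min 0 (resolvent_L2 M E \<alpha> v x) - 0/\<alpha>)\<^sup>2 + \<alpha>/2 * (max 0 (resolvent_L2 M E \<alpha> v x) - v x/\<alpha>)\<^sup>2
               \<le> \<alpha>/2 * (0 - 0/\<alpha>)\<^sup>2 + \<alpha>/2 * (resolvent_L2 M E \<alpha> v x - v x/\<alpha>)\<^sup>2"
    using pw_f[OF a v0] by (intro AE_I2) blast
  show ?thesis using ismin_compare[OF opf ismin_zero[OF opf a] m L2_zero v a a pw] by simp
qed

lemma G_mono_f:
  assumes v1: "v1 \<in> L2 M" and v2: "v2 \<in> L2 M" and le: "\<And>x. v1 x \<le> v2 x" and a: "0 < \<alpha>"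
  shows "AE x in M. resolvent_L2 M E \<alpha> v1 x \<le> resolvent_L2 M E \<alpha> v2 x"
proof -
  have m1: "ismin M E \<alpha> v1 (resolvent_L2 M E \<alpha> v1)" by (rule res_ismin[OF sf opf v1 a])
  have m2: "ismin M E \<alpha> v2 (resolvent_L2 M E \<alpha> v2)" by (rule res_ismin[OF sf opf v2 a])
  show ?thesis
    by (rule ismin_compare[OF opf m1 m2 v1 v2 a a]) (intro AE_I2 pw_f[OF a le])
qed

lemma G_mono_alpha:
  assumes v: "v \<in> L2 M" and v0: "\<And>x. 0 \<le> v x" and a: "0 < a" and ab: "a \<le> b"
  shows "AE x in M. resolvent_L2 M E b v x \<le> resolvent_L2 M E a v x"
proof -
  have b: "0 < b" using a ab by simp
  have m1: "ismin M E b v (resolvent_L2 M E b v)" by (rule res_ismin[OF sf opf v b])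
  have m2: "ismin M E a v (resolvent_L2 M E a v)" by (rule res_ismin[OF sf opf v a])
  show ?thesis
  proof (rule ismin_compare[OF opf m1 m2 v v b a])
    show "AE x in M. b / 2 * (min (resolvent_L2 M E b v x) (resolvent_L2 M E a v x) - v x / b)\<^sup>2 +
          a / 2 * (max (resolvent_L2 M E b v x) (resolvent_L2 M E a v x) - v x / a)\<^sup>2
          \<le> b / 2 * (resolvent_L2 M E b v x - v x / b)\<^sup>2 + a / 2 * (resolvent_L2 M E a v x - v x / a)\<^sup>2"
      using G_nonneg[OF v v0 a] by eventually_elim (rule pw_alpha[OF a ab])
  qed
qed

lemma hardy_bound:
  assumes hc: "hardy_const M E w = ennreal mr" and mr: "0 \<le> mr" and g: "g \<in> ME M E"
    and LB: "Lnorm M E g \<le> ennreal B" and B: "0 \<le> B"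
  shows "(\<integral>\<^sup>+x. ennreal \<bar>g x\<bar> * w x \<partial>M) \<le> ennreal (mr * B)"
proof (rule le_of_div_le[OF _ LB mr B])
  show "(\<integral>\<^sup>+x. ennreal \<bar>g x\<bar> * w x \<partial>M) / Lnorm M E g \<le> ennreal mr"
    unfolding hc[symmetric] hardy_const_def by (rule SUP_upper[OF g])
qed

lemma dir2_K:
  assumes w[measurable]: "w \<in> borel_measurable M" and hc: "hardy_const M E w = ennreal mr" and mr: "0 \<le> mr"
    and C: "mr < C"
  shows "Kfun M E (\<lambda>x. w x / ennreal C) \<le> 1"
proof -
  have C0: "0 < C" using mr C by simp
  define w' where "w' = (\<lambda>x. w x / ennreal C)"
  have w'm[measurable]: "w' \<in> borel_measurable M" unfolding w'_def by measurable
  define \<rho> where "\<rho> = mr / C"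
  have \<rho>: "0 \<le> \<rho>" "\<rho> < 1" unfolding \<rho>_def using mr C C0 by (auto simp: divide_less_eq)
  define Hk where "Hk k n y = resolvent_L2 M E (1 / real (Suc k)) (trunc M w' n) y" for k n y
  have vL2: "\<And>n. trunc M w' n \<in> L2 M" by (rule trunc_L2[OF sf w'm])
  have Hm[measurable]: "\<And>k n. Hk k n \<in> borel_measurable M"
  proof -
    fix k n
    have "ismin M E (1 / real (Suc k)) (trunc M w' n) (Hk k n)"
      unfolding Hk_def by (intro res_ismin[OF sf opf vL2]) simp
    then show "Hk k n \<in> borel_measurable M" unfolding ismin_def using L2_D by blast
  qed
  have bound: "(\<integral>\<^sup>+y. w' y * ennreal (Hk k n y) \<partial>M) \<le> 1" for k n
  proof -
    define \<alpha> where "\<alpha> = 1 / real (Suc k)"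
    have a: "0 < \<alpha>" unfolding \<alpha>_def by simp
    define v where "v = trunc M w' n"
    have v: "v \<in> L2 M" unfolding v_def by (rule vL2)
    have v0: "\<And>x. 0 \<le> v x" unfolding v_def by (rule trunc_nonneg)
    define g where "g = resolvent_L2 M E \<alpha> v"
    have m: "ismin M E \<alpha> v g" unfolding g_def by (rule res_ismin[OF sf opf v a])
    have gL2: "g \<in> L2 M" using m unfolding ismin_def by auto
    have gm[measurable]: "g \<in> borel_measurable M" using gL2 by (rule L2_D)
    define kk where "kk = (\<integral>x. v x * g x \<partial>M)"
    note en = ismin_energy[OF opf m v a]
    obtain eg where eg: "E g = ennreal eg" "0 \<le> eg" using en(1) by (cases "E g") auto
    have "0 \<le> \<alpha>/2 * (\<integral>x. (g x)\<^sup>2 \<partial>M)" using a by simp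
    then have egk: "eg \<le> kk" using en(2) eg unfolding kk_def by simp
    define B where "B = max 1 kk"
    have B1: "1 \<le> B" "kk \<le> B" unfolding B_def by auto
    have LB: "Lnorm M E g \<le> ennreal B"
    proof -
      have "E (\<lambda>x. g x / B) = E (\<lambda>x. (1/B) * g x)" by simp
      also have "\<dots> \<le> ennreal (1/B) * E g" using B1 by (intro E_scale[OF opf gL2]) auto
      also have "\<dots> = ennreal (eg / B)" using eg B1 by (simp add: ennreal_mult[symmetric])
      also have "\<dots> \<le> 1" using eg egk B1 by (simp add: ennreal_le_1 divide_le_eq)
      finally have "B \<in> {l. 0 < l \<and> E (\<lambda>x. g x / l) \<le> 1}" using B1 by simp
      then show ?thesis unfolding Lnorm_def by (rule INF_lower)
    qed
    have gME: "g \<in> ME M E"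
    proof -
      have "((\<lambda>l. E (\<lambda>x. l * g x)) \<longlongrightarrow> 0) (at_right 0)"
      proof (rule tendsto_sandwich[where f="\<lambda>_. 0" and h="\<lambda>l. ennreal (l * eg)"])
        show "\<forall>\<^sub>F l in at_right 0. 0 \<le> E (\<lambda>x. l * g x)" by simp
        show "\<forall>\<^sub>F l in at_right (0::real). E (\<lambda>x. l * g x) \<le> ennreal (l * eg)"
        proof (rule eventually_at_rightI[where b=1])
          fix l :: real assume "l \<in> {0<..<1}"
          then have l: "0 \<le> l" "l \<le> 1" by auto
          have "E (\<lambda>x. l * g x) \<le> ennreal l * E g" by (rule E_scale[OF opf gL2 l])
          also have "\<dots> = ennreal (l * eg)" using eg l by (simp add: ennreal_mult)
          finally show "E (\<lambda>x. l * g x) \<le> ennreal (l * eg)" .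
        qed simp
        show "((\<lambda>_. 0) \<longlongrightarrow> (0::ennreal)) (at_right 0)" by simp
        have "((\<lambda>l. ennreal (l * eg)) \<longlongrightarrow> ennreal (0 * eg)) (at_right 0)"
          by (intro tendsto_ennrealI tendsto_intros)
        then show "((\<lambda>l. ennreal (l * eg)) \<longlongrightarrow> 0) (at_right 0)" by simp
      qed
      then show ?thesis unfolding ME_def using gL2 by simp
    qed
    have Xg: "(\<integral>\<^sup>+x. ennreal \<bar>g x\<bar> * w x \<partial>M) \<le> ennreal (mr * B)"
      by (rule hardy_bound[OF hc mr gME LB]) (use B1 in simp)
    have Yeq: "(\<integral>\<^sup>+x. ennreal \<bar>g x\<bar> * w' x \<partial>M) = (\<integral>\<^sup>+x. ennreal \<bar>g x\<bar> * w x \<partial>M) * ennreal (1 / C)"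
    proof -
      have "(\<integral>\<^sup>+x. ennreal \<bar>g x\<bar> * w' x \<partial>M) = (\<integral>\<^sup>+x. ennreal \<bar>g x\<bar> * w x * ennreal (1 / C) \<partial>M)"
        unfolding w'_def using C0 by (intro nn_integral_cong) (simp add: divide_ennreal_def inverse_ennreal inverse_eq_divide ac_simps)
      also have "\<dots> = (\<integral>\<^sup>+x. ennreal \<bar>g x\<bar> * w x \<partial>M) * ennreal (1 / C)"
        by (rule nn_integral_multc) measurable
      finally show ?thesis .
    qed
    have Y: "(\<integral>\<^sup>+x. ennreal \<bar>g x\<bar> * w' x \<partial>M) \<le> ennreal (\<rho> * B)"
    proof -
      have "(\<integral>\<^sup>+x. ennreal \<bar>g x\<bar> * w x \<partial>M) * ennreal (1 / C) \<le> ennreal (mr * B) * ennreal (1 / C)"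
        by (intro mult_right_mono Xg) auto
      also have "\<dots> = ennreal (\<rho> * B)" unfolding \<rho>_def using mr B1 C0
        by (simp add: ennreal_mult[symmetric])
      finally show ?thesis unfolding Yeq .
    qed
    have "ennreal kk \<le> ennreal (\<integral>x. v x * \<bar>g x\<bar> \<partial>M)"
      unfolding kk_def
    proof (intro ennreal_leI integral_mono)
      show "integrable M (\<lambda>x. v x * g x)" by (intro L2_mult_integrable v gL2)
      show "integrable M (\<lambda>x. v x * \<bar>g x\<bar>)" by (intro L2_mult_integrable v L2_abs gL2)
      fix x show "v x * g x \<le> v x * \<bar>g x\<bar>" using v0[of x] by (intro mult_left_mono) auto
    qed
    also have "\<dots> = (\<integral>\<^sup>+x. ennreal (v x * \<bar>g x\<bar>) \<partial>M)"
      using v0 by (intro nn_integral_eq_integral[symmetric] L2_mult_integrable v L2_abs gL2 AE_I2 mult_nonneg_nonneg) auto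
    also have "\<dots> \<le> (\<integral>\<^sup>+x. ennreal \<bar>g x\<bar> * w' x \<partial>M)"
    proof (rule nn_integral_mono)
      fix x
      have "ennreal (v x * \<bar>g x\<bar>) = ennreal \<bar>g x\<bar> * ennreal (v x)"
        using v0[of x] by (simp add: ennreal_mult mult.commute)
      also have "\<dots> \<le> ennreal \<bar>g x\<bar> * w' x" unfolding v_def by (intro mult_left_mono trunc_le[OF sf]) auto
      finally show "ennreal (v x * \<bar>g x\<bar>) \<le> ennreal \<bar>g x\<bar> * w' x" .
    qed
    also have "\<dots> \<le> ennreal (\<rho> * B)" by (rule Y)
    finally have "kk \<le> \<rho> * B" using \<rho> B1 by (subst (asm) ennreal_le_iff) auto
    have "B = 1"
    proof (rule ccontr)
      assume "B \<noteq> 1"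
      then have "B = kk" "1 < kk" unfolding B_def by (auto simp: max_def split: if_splits)
      with \<open>kk \<le> \<rho> * B\<close> have "kk \<le> \<rho> * kk" by simp
      moreover have "\<rho> * kk < 1 * kk" using \<rho> \<open>1 < kk\<close> by (intro mult_strict_right_mono) auto
      ultimately show False by simp
    qed
    have "(\<integral>\<^sup>+y. w' y * ennreal (Hk k n y) \<partial>M) \<le> (\<integral>\<^sup>+x. ennreal \<bar>g x\<bar> * w' x \<partial>M)"
    proof (rule nn_integral_mono)
      fix y
      have "ennreal (Hk k n y) \<le> ennreal \<bar>g y\<bar>" unfolding Hk_def g_def \<alpha>_def v_def by (intro ennreal_leI) simp
      then show "w' y * ennreal (Hk k n y) \<le> ennreal \<bar>g y\<bar> * w' y" by (simp add: mult.commute mult_left_mono)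
    qed
    also have "\<dots> \<le> ennreal (\<rho> * B)" by (rule Y)
    also have "\<dots> \<le> 1" using \<open>B = 1\<close> \<rho> by (simp add: ennreal_le_1)
    finally show ?thesis .
  qed
  have monoAE: "AE y in M. \<forall>k. \<forall>n. Hk k n y \<le> Hk k (Suc n) y \<and> Hk k n y \<le> Hk (Suc k) n y"
  proof -
    have "AE y in M. Hk k n y \<le> Hk k (Suc n) y \<and> Hk k n y \<le> Hk (Suc k) n y" for k n
    proof -
      have "AE y in M. Hk k n y \<le> Hk k (Suc n) y"
        unfolding Hk_def by (rule G_mono_f[OF vL2 vL2 trunc_mono[OF sf]]) simp
      moreover have "AE y in M. Hk k n y \<le> Hk (Suc k) n y"
        unfolding Hk_def by (rule G_mono_alpha[OF vL2 trunc_nonneg]) (auto simp: field_simps)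
      ultimately show ?thesis by eventually_elim simp
    qed
    then show ?thesis by (simp add: AE_all_countable)
  qed
  define D where "D j y = ennreal (Hk j j y)" for j y
  have Dm[measurable]: "\<And>j. D j \<in> borel_measurable M" unfolding D_def by measurable
  have green_eq: "AE y in M. green M E w' y = (SUP j. D j y)"
    using monoAE
  proof eventually_elim
    case (elim y)
    have inc_n: "incseq (\<lambda>n. Hk k n y)" for k using elim by (intro incseq_SucI) auto
    have inc_k: "incseq (\<lambda>k. Hk k n y)" for n using elim by (intro incseq_SucI) auto
    have le: "Hk k n y \<le> Hk (max k n) (max k n) y" for k n
    proof -
      have "Hk k n y \<le> Hk k (max k n) y" using inc_n[of k] by (rule incseqD) simp
      also have "\<dots> \<le> Hk (max k n) (max k n) y" using inc_k[of "max k n"] by (rule incseqD) simp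
      finally show ?thesis .
    qed
    have "green M E w' y = (SUP k. SUP n. ennreal (Hk k n y))"
      unfolding green_def resolvent_trunc Hk_def ..
    also have "\<dots> = (SUP j. D j y)"
    proof (rule antisym)
      show "(SUP k. SUP n. ennreal (Hk k n y)) \<le> (SUP j. D j y)"
      proof (intro SUP_least)
        fix k n
        have "ennreal (Hk k n y) \<le> D (max k n) y" unfolding D_def by (intro ennreal_leI le)
        also have "\<dots> \<le> (SUP j. D j y)" by (rule SUP_upper) simp
        finally show "ennreal (Hk k n y) \<le> (SUP j. D j y)" .
      qed
      show "(SUP j. D j y) \<le> (SUP k. SUP n. ennreal (Hk k n y))"
      proof (intro SUP_least)
        fix j
        have "D j y \<le> (SUP n. ennreal (Hk j n y))" unfolding D_def by (rule SUP_upper) simp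
        also have "\<dots> \<le> (SUP k. SUP n. ennreal (Hk k n y))" by (rule SUP_upper) simp
        finally show "D j y \<le> (SUP k. SUP n. ennreal (Hk k n y))" .
      qed
    qed
    finally show ?case .
  qed
  have "Kfun M E w' = (\<integral>\<^sup>+y. w' y * green M E w' y \<partial>M)" unfolding Kfun_def ..
  also have "\<dots> = (\<integral>\<^sup>+y. (SUP j. w' y * D j y) \<partial>M)"
    using green_eq by (intro nn_integral_cong_AE) (auto elim!: eventually_mono simp: SUP_mult_left_ennreal)
  also have "\<dots> = (SUP j. \<integral>\<^sup>+y. w' y * D j y \<partial>M)"
  proof (rule nn_integral_monotone_convergence_SUP_AE)
    fix j
    show "AE y in M. w' y * D j y \<le> w' y * D (Suc j) y"
      using monoAE
    proof eventually_elim
      case (elim y)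
      have "Hk j j y \<le> Hk j (Suc j) y" using elim by auto
      also have "\<dots> \<le> Hk (Suc j) (Suc j) y" using elim by auto
      finally show ?case unfolding D_def by (intro mult_left_mono ennreal_leI) auto
    qed
    show "(\<lambda>y. w' y * D j y) \<in> borel_measurable M" by measurable
  qed
  also have "\<dots> \<le> 1" unfolding D_def by (intro SUP_least bound)
  finally show ?thesis unfolding w'_def .
qed

end

theorem corollary4p3:
  fixes M :: "'a measure" and E :: "('a \<Rightarrow> real) \<Rightarrow> ennreal" and w :: "'a \<Rightarrow> ennreal"
  assumes "sigma_finite_measure M"
    and "nonlinear_order_preserving_form M E"
    and "w \<in> borel_measurable M"
  shows "Ktilde M E w \<le> hardy_const M E w \<and> hardy_const M E w \<le> 2 * Ktilde M E w"
proof
  note sf = assms(1) and opf = assms(2) and w = assms(3)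
  show "Ktilde M E w \<le> hardy_const M E w"
  proof (cases "hardy_const M E w = \<infinity>")
    case True then show ?thesis by simp
  next
    case False
    then obtain mr where mr: "hardy_const M E w = ennreal mr" "0 \<le> mr"
      by (cases "hardy_const M E w") auto
    have "Ktilde M E w \<le> ennreal mr"
    proof (rule ennreal_le_epsilon)
      fix e :: real assume e: "0 < e"
      have "mr < mr + e" using e by simp
      then have K: "Kfun M E (\<lambda>x. w x / ennreal (mr + e)) \<le> 1"
        by (rule dir2_K[OF sf opf w mr(1) mr(2)])
      have "mr + e \<in> {C. 0 < C \<and> Kfun M E (\<lambda>x. w x / ennreal C) \<le> 1}" using K mr e by simp
      then have "Ktilde M E w \<le> ennreal (mr + e)" unfolding Ktilde_def by (rule INF_lower)
      then show "Ktilde M E w \<le> ennreal mr + ennreal e" using mr e by (simp add: ennreal_plus)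
    qed
    then show ?thesis using mr by simp
  qed
  show "hardy_const M E w \<le> 2 * Ktilde M E w"
    unfolding hardy_const_def
  proof (rule SUP_least)
    fix f assume fME: "f \<in> ME M E"
    then have f: "f \<in> L2 M" unfolding ME_def by simp
    define Z where "Z = (\<integral>\<^sup>+ x. ennreal \<bar>f x\<bar> * w x \<partial>M) / Lnorm M E f"
    have ZC: "Z \<le> ennreal (2 * C)" if C: "C \<in> {C. 0 < C \<and> Kfun M E (\<lambda>x. w x / ennreal C) \<le> 1}" for C
      unfolding Z_def Lnorm_def
    proof (rule div_INF_le)
      show "\<And>l. l \<in> {l. 0 < l \<and> E (\<lambda>x. f x / l) \<le> 1} \<Longrightarrow> 0 < l" by simp
      show "\<And>l. l \<in> {l. 0 < l \<and> E (\<lambda>x. f x / l) \<le> 1} \<Longrightarrow> (\<integral>\<^sup>+ x. ennreal \<bar>f x\<bar> * w x \<partial>M) \<le> ennreal (2 * C * l)"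
        using C by (intro dir1[OF sf opf w f]) auto
      show "0 < 2 * C" using C by simp
    qed
    have "Z / 2 \<le> Ktilde M E w"
      unfolding Ktilde_def
    proof (rule INF_greatest)
      fix C assume C: "C \<in> {C. 0 < C \<and> Kfun M E (\<lambda>x. w x / ennreal C) \<le> 1}"
      have "Z \<le> 2 * ennreal C" using ZC[OF C] C by (simp add: ennreal_mult)
      then show "Z / 2 \<le> ennreal C" by (intro divide_le_posI_ennreal) auto
    qed
    moreover have "Z = 2 * (Z / 2)"
    proof -
      have "Z / 2 * 2 = Z * (2 / 2)" by (rule ennreal_divide_times)
      moreover have "(2::ennreal) / 2 = 1" by (rule ennreal_divide_self) auto
      ultimately show ?thesis by (simp add: mult.commute)
    qed
    ultimately have "Z \<le> 2 * Ktilde M E w" by (metis mult_left_mono zero_le)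
    then show "(\<integral>\<^sup>+ x. ennreal \<bar>f x\<bar> * w x \<partial>M) / Lnorm M E f \<le> 2 * Ktilde M E w" unfolding Z_def .
  qed
qed


end
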